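(* Let $d\ge3$. There is a constant $\kappa>1$ (independent of $r$, $\rho$ and $\Lambda$) such that the following holds. Let $\rho\in(0,1)$, $r\ge1$ an integer, and let $\Lambda\subseteq\mathbb{Z}^d$ satisfy $$|\Lambda\cap Q(x,r)|\le\rho\,|Q(x,r)|\quad\text{for all }x\in2r\mathbb{Z}^d.$$ Then for any $n\ge\rho^{\frac2d-1}r^2$ and any $t\ge\kappa\rho n$, $$\mathbb{P}\big[|\mathcal{R}_n\cap\Lambda|\ge t\big]\le\exp\Big(-\rho^{1-\frac2d}\,\frac{t}{2r^2}\Big).$$
   Context: $(S_m)_{m\ge0}$ is the simple random walk on $\mathbb{Z}^d$ started at the origin, with law $\mathbb{P}$; $\mathcal{R}_n:=\{S_0,\dots,S_n\}$ is its range up to time $n$, and $|\cdot|$ denotes cardinality. For $x\in\mathbb{Z}^d$ and $r\ge1$, $Q(x,r):=(x+[-r,r)^d)\cap\mathbb{Z}^d$. *)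

theory Defs
  imports "HOL-Analysis.Analysis" "HOL-Probability.Probability"
begin

text \<open>Points of Z^d are vectors int ^ d; the dimension is d = CARD('d).\<close>

definition srw_steps :: "(int ^ 'd) set" where
  "srw_steps = {axis i 1 | i. True} \<union> {axis i (-1) | i. True}"

definition srw_increments :: "nat \<Rightarrow> (nat \<Rightarrow> int ^ 'd) pmf" where
  "srw_increments n = Pi_pmf {..<n} 0 (\<lambda>_. pmf_of_set srw_steps)"

definition srw_pos :: "(nat \<Rightarrow> int ^ 'd) \<Rightarrow> nat \<Rightarrow> int ^ 'd" where
  "srw_pos X m = (\<Sum>k<m. X k)"

definition srw_range :: "(nat \<Rightarrow> int ^ 'd) \<Rightarrow> nat \<Rightarrow> (int ^ 'd) set" where
  "srw_range X n = srw_pos X ` {..n}"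

definition box_Q :: "int ^ 'd \<Rightarrow> int \<Rightarrow> (int ^ 'd) set" where
  "box_Q x r = {y. \<forall>i. x $ i - r \<le> y $ i \<and> y $ i < x $ i + r}"

end

theory Submission
  imports Defs
begin

fun qk :: "nat \<Rightarrow> int \<Rightarrow> real" where
  "qk 0 z = (if z = 0 then 1 else 0)"
| "qk (Suc k) z = (qk k (z - 1) + qk k (z + 1)) / 2"

lemma qk_nonneg: "qk k z \<ge> 0"
  by (induction k arbitrary: z) auto

lemma qk_vanish: "\<bar>z\<bar> > int k \<Longrightarrow> qk k z = 0"
  by (induction k arbitrary: z) auto

lemma qk_parity: "odd (int k + z) \<Longrightarrow> qk k z = 0"
proof (induction k arbitrary: z)
  case 0 then show ?case by auto
next
  case (Suc k)
  have "odd (int k + (z - 1))" "odd (int k + (z+1))" using Suc.prems by auto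
  then show ?case using Suc.IH by simp
qed

lemma qk_sym: "qk k (- z) = qk k z"
proof (induction k arbitrary: z)
  case 0 then show ?case by auto
next
  case (Suc k)
  have "- z - 1 = - (z + 1)" "- z + 1 = - (z - 1)" by simp_all
  hence "qk k (- z - 1) = qk k (z + 1)" "qk k (- z + 1) = qk k (z - 1)"
    using Suc.IH[of "z+1"] Suc.IH[of "z-1"] by simp_all
  thus ?case by simp
qed

lemma qk_unimodal: "0 \<le> a \<Longrightarrow> a \<le> b \<Longrightarrow> even (b - a) \<Longrightarrow> qk k b \<le> qk k a"
proof (induction k arbitrary: a b)
  case 0 then show ?case by auto
next
  case (Suc k)
  show ?case
  proof (cases "a \<ge> 1")
    case True
    have "qk k (b - 1) \<le> qk k (a - 1)" using Suc.IH[of "a-1" "b-1"] Suc.prems True by auto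
    moreover have "qk k (b + 1) \<le> qk k (a + 1)" using Suc.IH[of "a+1" "b+1"] Suc.prems True by auto
    ultimately show ?thesis by simp
  next
    case False
    hence a0: "a = 0" using Suc.prems by auto
    show ?thesis
    proof (cases "b = 0")
      case True then show ?thesis using a0 by simp
    next
      case False
      hence "b \<ge> 2" using Suc.prems a0 by presburger
      have "qk k (b - 1) \<le> qk k 1" using Suc.IH[of 1 "b-1"] Suc.prems a0 \<open>b\<ge>2\<close> by auto
      moreover have "qk k (b + 1) \<le> qk k 1" using Suc.IH[of 1 "b+1"] Suc.prems a0 \<open>b\<ge>2\<close> by auto
      moreover have "qk k (-1) = qk k 1" using qk_sym[of k 1] by simp
      ultimately show ?thesis using a0 by simp
    qed
  qed
qed

lemma qk_closed: "qk k (2 * int a - int k) = real (k choose a) / 2 ^ k"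
proof (induction k arbitrary: a)
  case 0 then show ?case by (cases a) auto
next
  case (Suc k)
  show ?case
  proof (cases a)
    case 0
    have "qk k (- int k - 2) = 0" by (rule qk_vanish) simp
    moreover have "qk k (- int k) = 1 / 2 ^ k" using Suc.IH[of 0] by simp
    ultimately show ?thesis using 0 by (simp add: algebra_simps)
  next
    case (Suc a')
    have e1: "2 * int a - int (Suc k) - 1 = 2 * int a' - int k" using Suc by simp
    have e2: "2 * int a - int (Suc k) + 1 = 2 * int (Suc a') - int k" using Suc by simp
    have "qk (Suc k) (2 * int a - int (Suc k)) = (qk k (2 * int a' - int k) + qk k (2 * int (Suc a') - int k)) / 2"
      by (simp only: qk.simps e1 e2)
    also have "\<dots> = (real (k choose a') + real (k choose Suc a')) / 2 ^ Suc k"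
      using Suc.IH[of a'] Suc.IH[of "Suc a'"] by (simp add: add_divide_distrib)
    also have "\<dots> = real (Suc k choose a) / 2 ^ Suc k" using Suc by simp
    finally show ?thesis .
  qed
qed

lemma rec_aux:
  fixes X Y Y' Z :: nat
  assumes "Suc n * X = Suc (Suc (2*n)) * Y" "Suc n * Y' = Suc (2*n) * Z" "Suc n * Y' = Suc n * Y"
  shows "real X = real Z * (2 * (2*real n+1)) / (real n+1)"
proof -
  have "Y' = Y" using assms(3) Suc_mult_cancel1 by blast
  have "Suc n * X = Suc n * (2 * Y)" using assms(1) by (simp add: algebra_simps)
  hence "X = 2 * Y" by (simp only: Suc_mult_cancel1)
  hence x: "real X = 2 * real Y" by simp
  have "real (Suc n) * real Y = real (Suc (2*n)) * real Z" using assms(2) \<open>Y' = Y\<close> by (metis of_nat_mult)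
  hence "real Y = real Z * (2*real n+1) / (real n+1)" by (simp add: field_simps)
  thus ?thesis using x by simp
qed

lemma gen_aux: "(c::real) * (2 * (2*real n+1)) / (real n+1) / 4 ^ Suc n = c / 4 ^ n * ((2*real n+1) / (2*real n+2))"
proof -
  have a: "2*real n+2 = 2 * (real n+1)" by simp
  have p: "(4::real) ^ Suc n = 4 * 4^n" by simp
  have "c * (2 * (2*real n+1)) / (real n+1) / 4 ^ Suc n = (2 * (c * (2*real n+1))) / (2 * (2 * (real n+1) * 4^n))"
    unfolding p by (simp add: field_simps)
  also have "\<dots> = (c * (2*real n+1)) / (2 * (real n+1) * 4^n)" by (rule mult_divide_mult_cancel_left) simp
  also have "\<dots> = c / 4 ^ n * ((2*real n+1) / (2*real n+2))" unfolding a by (simp add: field_simps)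
  finally show ?thesis .
qed

lemma aux2: "(x::real) \<ge> 0 \<Longrightarrow> 1 / (2*x+1) * ((2*x+1) / (2*x+2))^2 \<le> 1 / (2 * x + 3)"
proof -
  assume x: "x \<ge> 0"
  have "1 / (2*x+1) * ((2*x+1) / (2*x+2))^2 = (2*x+1) / (2*x+2)^2"
    using x by (simp add: power2_eq_square divide_simps)
  also have "\<dots> \<le> 1 / (2 * x + 3)"
    using x by (simp add: divide_simps power2_eq_square algebra_simps add_pos_nonneg)
  finally show ?thesis .
qed

lemma seq_sq_bound:
  fixes b :: "nat \<Rightarrow> real"
  assumes b0: "b 0 = 1" and bS: "\<And>n. b (Suc n) = b n * ((2*real n+1) / (2*real n+2))"
  shows "(b n)^2 \<le> 1 / (2 * real n + 1)"
proof (induction n)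
  case 0 then show ?case using b0 by simp
next
  case (Suc n)
  have "(b (Suc n))^2 = (b n)^2 * ((2*real n+1) / (2*real n+2))^2"
    unfolding bS by (rule power_mult_distrib)
  also have "\<dots> \<le> 1 / (2*real n+1) * ((2*real n+1) / (2*real n+2))^2"
    using Suc.IH by (intro mult_right_mono) auto
  also have "\<dots> \<le> 1 / (2 * real n + 3)" by (rule aux2) simp
  also have "2 * real n + 3 = 2 * real (Suc n) + 1" by simp
  finally show ?case .
qed

lemma central_rec: "real ((2 * Suc n) choose Suc n) / 4 ^ Suc n = real ((2*n) choose n) / 4 ^ n * ((2*real n+1) / (2*real n+2))"
proof -
  have h: "Suc n * (Suc (2*n) choose Suc n) = Suc n * (Suc (2*n) choose n)"
    using Suc_times_binomial_add[of n n] by (simp only: mult_2)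
  have e: "2 * Suc n = Suc (Suc (2*n))" by simp
  have rec: "real ((2 * Suc n) choose Suc n) = real ((2*n) choose n) * (2 * (2*real n+1)) / (real n+1)"
    unfolding e by (rule rec_aux[OF Suc_times_binomial[of n "Suc (2*n)"] Suc_times_binomial[of n "2*n"] h])
  show ?thesis by (subst rec) (rule gen_aux)
qed

lemma central_binom_sq: "(real ((2*n) choose n) / 4 ^ n)^2 \<le> 1 / (2 * real n + 1)"
proof -
  let ?b = "\<lambda>n. real ((2*n) choose n) / 4 ^ n"
  have b0: "?b 0 = 1" by simp
  have r: "\<And>m. ?b (Suc m) = ?b m * ((2*real m+1)/(2*real m+2))" by (simp only: central_rec)
  show ?thesis using seq_sq_bound[of ?b, OF b0 r, of n] by (simp only:)
qed

lemma central_binom_bound: "real ((2*n) choose n) / 4 ^ n \<le> 1 / sqrt (2 * real n + 1)"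
proof -
  have "sqrt ((real ((2*n) choose n) / 4 ^ n)^2) \<le> sqrt (1 / (2 * real n + 1))"
    using real_sqrt_le_mono central_binom_sq by blast
  moreover have "sqrt ((real ((2*n) choose n) / 4 ^ n)^2) = real ((2*n) choose n) / 4 ^ n"
    by (rule real_sqrt_unique) auto
  moreover have "sqrt (1 / (2 * real n + 1)) = 1 / sqrt (2 * real n + 1)"
    by (simp only: real_sqrt_divide real_sqrt_one)
  ultimately show ?thesis by (simp only:)
qed

lemma qk_form: "qk k z \<noteq> 0 \<Longrightarrow> \<exists>a. a \<le> k \<and> z = 2 * int a - int k"
proof -
  assume nz: "qk k z \<noteq> 0"
  hence "\<bar>z\<bar> \<le> int k" using qk_vanish[of k z] by linarith
  moreover have "even (int k + z)" using qk_parity[of k z] nz by auto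
  moreover obtain m where m0: "int k + z = 2 * m" using \<open>even (int k + z)\<close> by (rule evenE)
  ultimately have m: "int k + z = 2 * m" "0 \<le> m" "m \<le> int k" by linarith+
  show ?thesis
    by (rule exI[of _ "nat m"]) (use m in auto)
qed

lemma binom_odd_central: "real ((2*n+1) choose n) / 2 ^ (2*n+1) = real ((2 * Suc n) choose Suc n) / 4 ^ Suc n"
proof -
  have 1: "Suc n * (Suc (Suc (2*n)) choose Suc n) = Suc (Suc (2*n)) * (Suc (2*n) choose n)"
    by (rule Suc_times_binomial)
  have "Suc n * (Suc (Suc (2*n)) choose Suc n) = Suc n * (2 * (Suc (2*n) choose n))"
    using 1 by (simp add: algebra_simps)
  hence X: "Suc (Suc (2*n)) choose Suc n = 2 * (Suc (2*n) choose n)" by (simp only: Suc_mult_cancel1)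
  have e: "2 * Suc n = Suc (Suc (2*n))" by simp
  have p: "(4::real) ^ Suc n = 2 * 2 ^ (2*n+1)"
    by (simp add: power_mult power_add)
  show ?thesis unfolding e X p by simp
qed

lemma qk_max: "qk k z \<le> 1 / sqrt (real k + 1)"
proof (cases "qk k z = 0")
  case True then show ?thesis by simp
next
  case False
  then obtain a where a: "a \<le> k" "z = 2 * int a - int k" using qk_form by blast
  have "qk k z = real (k choose a) / 2 ^ k" using a qk_closed by simp
  also have "\<dots> \<le> real (k choose (k div 2)) / 2 ^ k"
    by (intro divide_right_mono) (simp_all add: binomial_maximum)
  also have "\<dots> \<le> 1 / sqrt (real k + 1)"
  proof (cases "even k")
    case True
    then obtain n where n: "k = 2 * n" by blast
    have "real (k choose (k div 2)) / 2 ^ k = real ((2*n) choose n) / 4 ^ n"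
      unfolding n by (simp add: power_mult)
    also have "\<dots> \<le> 1 / sqrt (2 * real n + 1)" by (rule central_binom_bound)
    finally show ?thesis using n by simp
  next
    case False
    then obtain n where n: "k = 2 * n + 1" using oddE by blast
    have kd: "k div 2 = n" using n by simp
    have e2: "(2*n+1) div 2 = n" by simp
    have "real (k choose (k div 2)) / 2 ^ k = real ((2*n+1) choose n) / 2 ^ (2*n+1)"
      by (simp only: kd n e2)
    also have "\<dots> = real ((2 * Suc n) choose Suc n) / 4 ^ Suc n" by (rule binom_odd_central)
    also have "\<dots> \<le> 1 / sqrt (2 * real (Suc n) + 1)" by (rule central_binom_bound)
    also have "\<dots> \<le> 1 / sqrt (real k + 1)"
      using n by (intro divide_left_mono real_sqrt_le_mono) auto
    finally show ?thesis .
  qed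
  finally show ?thesis .
qed

lemma qk_sum_eq: "(\<Sum>z\<in>{- int k..int k}. qk k z) = 1"
proof -
  let ?g = "\<lambda>a::nat. 2 * int a - int k"
  have inj: "inj_on ?g {..k}" by (auto simp: inj_on_def)
  have sub: "?g ` {..k} \<subseteq> {- int k..int k}" by auto
  have "(\<Sum>z\<in>{- int k..int k}. qk k z) = (\<Sum>z\<in>?g ` {..k}. qk k z)"
  proof (rule sum.mono_neutral_right)
    show "finite {- int k..int k}" by simp
    show "?g ` {..k} \<subseteq> {- int k..int k}" by (rule sub)
    show "\<forall>i\<in>{- int k..int k} - ?g ` {..k}. qk k i = 0"
    proof
      fix z assume z: "z \<in> {- int k..int k} - ?g ` {..k}"
      show "qk k z = 0"
      proof (rule ccontr)
        assume "qk k z \<noteq> 0"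
        then obtain a where "a \<le> k" "z = ?g a" using qk_form by blast
        thus False using z by auto
      qed
    qed
  qed
  also have "\<dots> = (\<Sum>a\<le>k. qk k (?g a))" by (rule sum.reindex[OF inj, unfolded comp_def])
  also have "\<dots> = (\<Sum>a\<le>k. real (k choose a) / 2 ^ k)" by (simp only: qk_closed)
  also have "\<dots> = real (\<Sum>a\<le>k. k choose a) / 2 ^ k" by (simp add: sum_divide_distrib)
  also have "\<dots> = 1" by (simp only: choose_row_sum) simp
  finally show ?thesis .
qed

lemma qk_sum_le: "finite W \<Longrightarrow> (\<Sum>w\<in>W. qk k (w - ofs)) \<le> 1"
proof -
  assume W: "finite W"
  have "(\<Sum>w\<in>W. qk k (w - ofs)) = (\<Sum>z\<in>(\<lambda>w. w - ofs) ` W. qk k z)"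
    by (subst sum.reindex) (auto simp: inj_on_def)
  also have "\<dots> = (\<Sum>z\<in>(\<lambda>w. w - ofs) ` W \<inter> {- int k..int k}. qk k z)"
  proof (rule sum.mono_neutral_right)
    show "finite ((\<lambda>w. w - ofs) ` W)" using W by simp
    show "\<forall>i\<in>(\<lambda>w. w - ofs) ` W - (\<lambda>w. w - ofs) ` W \<inter> {- int k..int k}. qk k i = 0"
    proof
      fix z assume "z \<in> (\<lambda>w. w - ofs) ` W - (\<lambda>w. w - ofs) ` W \<inter> {- int k..int k}"
      hence "\<bar>z\<bar> > int k" by auto
      thus "qk k z = 0" by (rule qk_vanish)
    qed
  qed auto
  also have "\<dots> \<le> (\<Sum>z\<in>{- int k..int k}. qk k z)"
    by (rule sum_mono2) (auto simp: qk_nonneg)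
  finally show ?thesis using qk_sum_eq by simp
qed

lemma div_char: assumes b: "(b::int) > 0" shows "(a div b = q) \<longleftrightarrow> (b*q \<le> a \<and> a < b*q + b)"
proof
  assume q: "a div b = q"
  have "a = b * q + a mod b" using div_mult_mod_eq[of a b] q by (simp add: mult.commute)
  moreover have "0 \<le> a mod b" "a mod b < b" using b by simp_all
  ultimately show "b*q \<le> a \<and> a < b*q + b" by linarith
next
  assume h: "b*q \<le> a \<and> a < b*q + b"
  have "a = b * (a div b) + a mod b" by simp
  moreover have "0 \<le> a mod b" "a mod b < b" using b by simp_all
  ultimately have d: "b*(a div b) \<le> a" "a < b*(a div b) + b" by linarith+
  have e: "b * (a div b - q) = b*(a div b) - b*q" "b * (q - a div b) = b*q - b*(a div b)"
    by (simp_all add: right_diff_distrib)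
  have "b * (a div b - q) < b * 1" "b * (q - a div b) < b * 1" using d h unfolding e by linarith+
  hence "a div b - q < 1" "q - a div b < 1" using b mult_less_cancel_left_pos by blast+
  thus "a div b = q" by linarith
qed

definition Iblk :: "nat \<Rightarrow> int \<Rightarrow> int set" where
  "Iblk r c = {2 * int r * c - int r ..< 2 * int r * c + int r}"

lemma Iblk_iff: "r \<ge> 1 \<Longrightarrow> w \<in> Iblk r c \<longleftrightarrow> (w + int r) div (2 * int r) = c"
proof -
  assume r: "r \<ge> 1"
  have "(w + int r) div (2 * int r) = c \<longleftrightarrow> (2 * int r * c \<le> w + int r \<and> w + int r < 2 * int r * c + 2 * int r)"
    by (rule div_char) (use r in simp)
  thus ?thesis unfolding Iblk_def by auto
qed

lemma Iblk_fin: "finite (Iblk r c)" unfolding Iblk_def by simp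

lemma Iblk_mem: "r \<ge> 1 \<Longrightarrow> 2 * int r * c \<in> Iblk r c" unfolding Iblk_def by simp

definition bmax :: "nat \<Rightarrow> int \<Rightarrow> nat \<Rightarrow> int \<Rightarrow> real" where
  "bmax k ofs r c = Max ((\<lambda>w. qk k (w - ofs)) ` Iblk r c)"

lemma bmax_ge: "w \<in> Iblk r c \<Longrightarrow> qk k (w - ofs) \<le> bmax k ofs r c"
  unfolding bmax_def by (rule Max_ge) (simp_all add: Iblk_fin)

lemma bmax_attained: "r \<ge> 1 \<Longrightarrow> \<exists>w\<in>Iblk r c. bmax k ofs r c = qk k (w - ofs)"
proof -
  assume r: "r \<ge> 1"
  have "bmax k ofs r c \<in> (\<lambda>w. qk k (w - ofs)) ` Iblk r c"
    unfolding bmax_def by (rule Max_in) (use Iblk_fin Iblk_mem[OF r] in auto)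
  thus ?thesis by auto
qed

lemma bmax_nonneg: "r \<ge> 1 \<Longrightarrow> bmax k ofs r c \<ge> 0"
  using bmax_attained[of r c k ofs] qk_nonneg by auto

lemma bmax_le: "r \<ge> 1 \<Longrightarrow> bmax k ofs r c \<le> 1 / sqrt (real k + 1)"
  using bmax_attained[of r c k ofs] qk_max by auto

lemma bmax_right:
  assumes r: "r \<ge> 1" and c: "2 * int r * c - 3 * int r - ofs \<ge> 0"
  shows "real r * bmax k ofs r c \<le> (\<Sum>w\<in>Iblk r (c - 1). qk k (w - ofs))"
proof -
  obtain w where w: "w \<in> Iblk r c" "bmax k ofs r c = qk k (w - ofs)" using bmax_attained[OF r] by blast
  define s where "s = 2 * int r * c - 3 * int r"
  define p where "p = (w - s) mod 2"
  define E where "E = (\<lambda>j::nat. s + 2 * int j + p) ` {0..<r}"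
  have p01: "0 \<le> p" "p \<le> 1" unfolding p_def by simp_all
  have inj: "inj_on (\<lambda>j::nat. s + 2 * int j + p) {0..<r}" by (auto simp: inj_on_def)
  have cardE: "card E = r" unfolding E_def using card_image[OF inj] by simp
  have wlo: "w \<ge> 2 * int r * c - int r" using w(1) unfolding Iblk_def by simp
  have EI: "E \<subseteq> Iblk r (c - 1)"
  proof
    fix e assume "e \<in> E"
    then obtain j where j: "j < r" "e = s + 2 * int j + p" unfolding E_def by auto
    have "2 * int r * (c - 1) = 2 * int r * c - 2 * int r" by (simp add: algebra_simps)
    thus "e \<in> Iblk r (c - 1)" unfolding Iblk_def using j p01 s_def by auto
  qed
  have le: "qk k (w - ofs) \<le> qk k (e - ofs)" if "e \<in> E" for e
  proof -
    obtain j where j: "j < r" "e = s + 2 * int j + p" using \<open>e \<in> E\<close> unfolding E_def by auto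
    have "even ((w - s) - (w - s) mod 2)" by (simp add: minus_mod_eq_mult_div)
    hence ev: "even ((w - ofs) - (e - ofs))" unfolding j p_def by (simp add: algebra_simps)
    have "e - ofs \<ge> 0" using j p01 c s_def by simp
    moreover have "e \<le> w" using j p01 s_def wlo by simp
    ultimately show ?thesis using qk_unimodal[of "e - ofs" "w - ofs" k] ev by simp
  qed
  have "real r * bmax k ofs r c = (\<Sum>e\<in>E. qk k (w - ofs))" using cardE w(2) by simp
  also have "\<dots> \<le> (\<Sum>e\<in>E. qk k (e - ofs))" by (rule sum_mono) (rule le)
  also have "\<dots> \<le> (\<Sum>e\<in>Iblk r (c - 1). qk k (e - ofs))"
    by (rule sum_mono2) (simp_all add: Iblk_fin EI qk_nonneg)
  finally show ?thesis .
qed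

lemma bmax_left:
  assumes r: "r \<ge> 1" and c: "2 * int r * c + 3 * int r - ofs \<le> 0"
  shows "real r * bmax k ofs r c \<le> (\<Sum>w\<in>Iblk r (c + 1). qk k (w - ofs))"
proof -
  obtain w where w: "w \<in> Iblk r c" "bmax k ofs r c = qk k (w - ofs)" using bmax_attained[OF r] by blast
  define s where "s = 2 * int r * c + int r"
  define p where "p = (s - w) mod 2"
  define E where "E = (\<lambda>j::nat. s + 2 * int j + p) ` {0..<r}"
  have p01: "0 \<le> p" "p \<le> 1" unfolding p_def by simp_all
  have inj: "inj_on (\<lambda>j::nat. s + 2 * int j + p) {0..<r}" by (auto simp: inj_on_def)
  have cardE: "card E = r" unfolding E_def using card_image[OF inj] by simp
  have whi: "w < 2 * int r * c + int r" using w(1) unfolding Iblk_def by simp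
  have EI: "E \<subseteq> Iblk r (c + 1)"
  proof
    fix e assume "e \<in> E"
    then obtain j where j: "j < r" "e = s + 2 * int j + p" unfolding E_def by auto
    have "2 * int r * (c + 1) = 2 * int r * c + 2 * int r" by (simp add: algebra_simps)
    thus "e \<in> Iblk r (c + 1)" unfolding Iblk_def using j p01 s_def by auto
  qed
  have le: "qk k (w - ofs) \<le> qk k (e - ofs)" if "e \<in> E" for e
  proof -
    obtain j where j: "j < r" "e = s + 2 * int j + p" using \<open>e \<in> E\<close> unfolding E_def by auto
    have "even ((s - w) + (s - w) mod 2)"
      by (metis add.commute even_add even_mod_2_iff)
    hence ev: "even ((ofs - w) - (ofs - e))" unfolding j p_def by (simp add: algebra_simps)
    have "ofs - e \<ge> 0" using j p01 c s_def by simp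
    moreover have "w \<le> e" using j p01 s_def whi by simp
    ultimately have "qk k (ofs - w) \<le> qk k (ofs - e)" using qk_unimodal[of "ofs - e" "ofs - w" k] ev by simp
    thus ?thesis using qk_sym[of k "ofs - w"] qk_sym[of k "ofs - e"] by simp
  qed
  have "real r * bmax k ofs r c = (\<Sum>e\<in>E. qk k (w - ofs))" using cardE w(2) by simp
  also have "\<dots> \<le> (\<Sum>e\<in>E. qk k (e - ofs))" by (rule sum_mono) (rule le)
  also have "\<dots> \<le> (\<Sum>e\<in>Iblk r (c + 1). qk k (e - ofs))"
    by (rule sum_mono2) (simp_all add: Iblk_fin EI qk_nonneg)
  finally show ?thesis .
qed

lemma Iblk_disj: "r \<ge> 1 \<Longrightarrow> c \<noteq> c' \<Longrightarrow> Iblk r c \<inter> Iblk r c' = {}"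
proof -
  assume r: "r \<ge> 1" and cc: "c \<noteq> c'"
  { fix w assume "w \<in> Iblk r c" "w \<in> Iblk r c'"
    hence "c = c'" using Iblk_iff[OF r, of w] by simp
    hence False using cc by simp }
  thus ?thesis by blast
qed

lemma union_sum_le:
  assumes r: "r \<ge> 1" and C: "finite C" and that: "inj_on f C"
  shows "(\<Sum>c\<in>C. \<Sum>w\<in>Iblk r (f c). qk k (w - ofs)) \<le> 1"
proof -
  have "(\<Sum>c\<in>C. \<Sum>w\<in>Iblk r (f c). qk k (w - ofs)) = (\<Sum>w\<in>(\<Union>c\<in>C. Iblk r (f c)). qk k (w - ofs))"
  proof (rule sum.UNION_disjoint[symmetric])
    show "finite C" by (rule C)
    show "\<forall>c\<in>C. finite (Iblk r (f c))" by (simp add: Iblk_fin)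
    show "\<forall>i\<in>C. \<forall>j\<in>C. i \<noteq> j \<longrightarrow> Iblk r (f i) \<inter> Iblk r (f j) = {}"
      using Iblk_disj[OF r] that by (auto simp: inj_on_def)
  qed
  also have "\<dots> \<le> 1" by (rule qk_sum_le) (simp add: C Iblk_fin)
  finally show ?thesis .
qed

lemma block_sum:
  assumes r: "r \<ge> 1" and C: "finite C"
  shows "(\<Sum>c\<in>C. bmax k ofs r c) \<le> 3 / sqrt (real k + 1) + 2 / real r"
proof -
  define C1 where "C1 = {c\<in>C. 2 * int r * c - 3 * int r - ofs \<ge> 0}"
  define C2 where "C2 = {c\<in>C. 2 * int r * c + 3 * int r - ofs \<le> 0}"
  define C3 where "C3 = C - C1 - C2"
  have fin: "finite C1" "finite C2" "finite C3" using C unfolding C1_def C2_def C3_def by auto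
  have s1: "C1 \<subseteq> C" "C2 \<subseteq> C - C1" using r unfolding C1_def C2_def by auto
  have "(\<Sum>c\<in>C. bmax k ofs r c) = (\<Sum>c\<in>C - C1. bmax k ofs r c) + (\<Sum>c\<in>C1. bmax k ofs r c)"
    by (rule sum.subset_diff[OF s1(1) C])
  also have "(\<Sum>c\<in>C - C1. bmax k ofs r c) = (\<Sum>c\<in>C3. bmax k ofs r c) + (\<Sum>c\<in>C2. bmax k ofs r c)"
    unfolding C3_def by (rule sum.subset_diff[OF s1(2)]) (use C in simp)
  finally have split: "(\<Sum>c\<in>C. bmax k ofs r c) = (\<Sum>c\<in>C1. bmax k ofs r c) + (\<Sum>c\<in>C2. bmax k ofs r c) + (\<Sum>c\<in>C3. bmax k ofs r c)"
    by simp
  have rpos: "real r > 0" using r by simp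
  have b1: "(\<Sum>c\<in>C1. bmax k ofs r c) \<le> 1 / real r"
  proof -
    have "(\<Sum>c\<in>C1. bmax k ofs r c) \<le> (\<Sum>c\<in>C1. (\<Sum>w\<in>Iblk r (c - 1). qk k (w - ofs)) / real r)"
    proof (rule sum_mono)
      fix c assume "c \<in> C1"
      hence "real r * bmax k ofs r c \<le> (\<Sum>w\<in>Iblk r (c - 1). qk k (w - ofs))"
        using bmax_right[OF r] unfolding C1_def by auto
      thus "bmax k ofs r c \<le> (\<Sum>w\<in>Iblk r (c - 1). qk k (w - ofs)) / real r"
        using rpos by (simp add: field_simps)
    qed
    also have "\<dots> = (\<Sum>c\<in>C1. \<Sum>w\<in>Iblk r (c - 1). qk k (w - ofs)) / real r"
      by (simp add: sum_divide_distrib)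
    also have "\<dots> \<le> 1 / real r"
      using union_sum_le[OF r fin(1), of "\<lambda>c. c - 1"] rpos by (intro divide_right_mono) (auto simp: inj_on_def)
    finally show ?thesis .
  qed
  have b2: "(\<Sum>c\<in>C2. bmax k ofs r c) \<le> 1 / real r"
  proof -
    have "(\<Sum>c\<in>C2. bmax k ofs r c) \<le> (\<Sum>c\<in>C2. (\<Sum>w\<in>Iblk r (c + 1). qk k (w - ofs)) / real r)"
    proof (rule sum_mono)
      fix c assume "c \<in> C2"
      hence "real r * bmax k ofs r c \<le> (\<Sum>w\<in>Iblk r (c + 1). qk k (w - ofs))"
        using bmax_left[OF r] unfolding C2_def by auto
      thus "bmax k ofs r c \<le> (\<Sum>w\<in>Iblk r (c + 1). qk k (w - ofs)) / real r"
        using rpos by (simp add: field_simps)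
    qed
    also have "\<dots> = (\<Sum>c\<in>C2. \<Sum>w\<in>Iblk r (c + 1). qk k (w - ofs)) / real r"
      by (simp add: sum_divide_distrib)
    also have "\<dots> \<le> 1 / real r"
      using union_sum_le[OF r fin(2), of "\<lambda>c. c + 1"] rpos by (intro divide_right_mono) (auto simp: inj_on_def)
    finally show ?thesis .
  qed
  have b3: "(\<Sum>c\<in>C3. bmax k ofs r c) \<le> 3 / sqrt (real k + 1)"
  proof -
    define c0 where "c0 = (ofs - 3 * int r) div (2 * int r)"
    have r2: "2 * int r > 0" using r by simp
    have c0p: "2 * int r * c0 \<le> ofs - 3 * int r" "ofs - 3 * int r < 2 * int r * c0 + 2 * int r"
      using div_char[OF r2, of "ofs - 3 * int r" c0] unfolding c0_def by auto
    have sub: "C3 \<subseteq> {c0 + 1 .. c0 + 3}"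
    proof
      fix c assume "c \<in> C3"
      hence h: "2 * int r * c - 3 * int r - ofs < 0" "2 * int r * c + 3 * int r - ofs > 0"
        unfolding C3_def C1_def C2_def by auto
      have "2 * int r * c0 < 2 * int r * c" using h c0p by linarith
      hence "c0 < c" using r2 mult_less_cancel_left_pos by blast
      moreover have "2 * int r * c < 2 * int r * (c0 + 4)"
        using h c0p by (simp add: algebra_simps)
      hence "c < c0 + 4" using r2 mult_less_cancel_left_pos by blast
      ultimately show "c \<in> {c0 + 1 .. c0 + 3}" by simp
    qed
    have "card C3 \<le> card {c0 + 1 .. c0 + 3}" by (rule card_mono) (simp_all add: sub)
    hence cC3: "card C3 \<le> 3" by simp
    have "(\<Sum>c\<in>C3. bmax k ofs r c) \<le> (\<Sum>c\<in>C3. 1 / sqrt (real k + 1))"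
      by (rule sum_mono) (rule bmax_le[OF r])
    also have "\<dots> = real (card C3) * (1 / sqrt (real k + 1))" by simp
    also have "\<dots> \<le> 3 * (1 / sqrt (real k + 1))"
      using cC3 by (intro mult_right_mono) auto
    finally show ?thesis by simp
  qed
  show ?thesis using split b1 b2 b3 by simp
qed

definition vset :: "('d::finite \<Rightarrow> int set) \<Rightarrow> (int ^ 'd) set" where
  "vset C = {b. \<forall>i. b $ i \<in> C i}"

lemma vset_bij: "bij_betw vec_nth (vset C) (Pi\<^sub>E UNIV C)"
proof (rule bij_betwI')
  show "\<And>x y. x \<in> vset C \<Longrightarrow> y \<in> vset C \<Longrightarrow> (vec_nth x = vec_nth y) = (x = y)"
    by (auto simp: vec_eq_iff)
  show "\<And>x. x \<in> vset C \<Longrightarrow> vec_nth x \<in> Pi\<^sub>E UNIV C"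
    by (auto simp: vset_def PiE_UNIV_domain)
  show "\<And>y. y \<in> Pi\<^sub>E UNIV C \<Longrightarrow> \<exists>x\<in>vset C. y = vec_nth x"
  proof -
    fix y assume y: "y \<in> Pi\<^sub>E UNIV C"
    have "vec_nth (vec_lambda y) = y" by (simp add: vec_lambda_inverse)
    moreover have "vec_lambda y \<in> vset C" using y by (auto simp: vset_def PiE_UNIV_domain)
    ultimately show "\<exists>x\<in>vset C. y = vec_nth x" by metis
  qed
qed

lemma vset_finite: "(\<And>i. finite (C i)) \<Longrightarrow> finite (vset C)"
  using bij_betw_finite[OF vset_bij, of C] finite_PiE[of UNIV C] by simp

lemma vset_card: "(\<And>i. finite (C i)) \<Longrightarrow> card (vset C) = (\<Prod>i\<in>UNIV. card (C i))"
  using bij_betw_same_card[OF vset_bij, of C] card_PiE[of UNIV C] by simp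

lemma vset_prod_sum:
  fixes G :: "'d::finite \<Rightarrow> int \<Rightarrow> real"
  assumes "\<And>i. finite (C i)"
  shows "(\<Sum>b\<in>vset C. \<Prod>i\<in>UNIV. G i (b $ i)) = (\<Prod>i\<in>UNIV. \<Sum>c\<in>C i. G i c)"
proof -
  have "(\<Sum>b\<in>vset C. \<Prod>i\<in>UNIV. G i (b $ i)) = (\<Sum>f\<in>Pi\<^sub>E UNIV C. \<Prod>i\<in>UNIV. G i (f i))"
    by (rule sum.reindex_bij_betw[OF vset_bij, of "\<lambda>f. \<Prod>i\<in>UNIV. G i (f i)"])
  also have "\<dots> = (\<Prod>i\<in>UNIV. \<Sum>c\<in>C i. G i c)"
    by (rule prod_sum_PiE[symmetric]) (simp_all add: assms)
  finally show ?thesis .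
qed

lemma box_Q_vset: "box_Q x r = vset (\<lambda>i. {x $ i - r ..< x $ i + r})"
  unfolding box_Q_def vset_def by auto

lemma card_box_Q: fixes x :: "int ^ 'd::finite" shows "r \<ge> 0 \<Longrightarrow> card (box_Q x r) = nat (2 * r) ^ CARD('d)"
proof -
  assume r: "r \<ge> 0"
  have "card (box_Q x r) = (\<Prod>i\<in>(UNIV::'d set). card {x $ i - r ..< x $ i + r})"
    unfolding box_Q_vset by (rule vset_card) simp
  also have "\<dots> = (\<Prod>i\<in>(UNIV::'d set). nat (2 * r))" by simp
  finally show ?thesis by simp
qed

definition Box :: "nat \<Rightarrow> (int ^ 'd::finite) set" where
  "Box L = vset (\<lambda>_. {- int L .. int L})"

lemma Box_finite: "finite (Box L)" unfolding Box_def by (rule vset_finite) simp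

lemma Box_iff: "z \<in> Box L \<longleftrightarrow> (\<forall>i. \<bar>z $ i\<bar> \<le> int L)"
proof -
  have "\<And>i. (z $ i \<in> {- int L .. int L}) = (\<bar>z $ i\<bar> \<le> int L)" by (auto simp: abs_le_iff)
  thus ?thesis unfolding Box_def vset_def by simp
qed

lemma Box_mono: assumes "L \<le> L'" shows "Box L \<subseteq> Box L'"
proof
  fix z assume "z \<in> Box L"
  hence "\<bar>z $ i\<bar> \<le> int L" for i using Box_iff by blast
  moreover have "int L \<le> int L'" using assms by simp
  ultimately have "\<bar>z $ i\<bar> \<le> int L'" for i by (meson order_trans)
  thus "z \<in> Box L'" using Box_iff by blast
qed

lemma Box_0: "Box 0 = {0}"
  by (auto simp: Box_iff vec_eq_iff)

definition kern :: "('d::finite \<Rightarrow> nat) \<Rightarrow> int ^ 'd \<Rightarrow> real" where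
  "kern N z = (\<Prod>i\<in>UNIV. qk (N i) (z $ i))"

definition sumN :: "('d::finite \<Rightarrow> nat) \<Rightarrow> nat" where
  "sumN N = (\<Sum>i\<in>UNIV. N i)"

lemma N_le_sumN: "N i \<le> sumN N"
  unfolding sumN_def by (rule member_le_sum) simp_all

lemma kern_nonneg: "kern N z \<ge> 0"
  unfolding kern_def by (rule prod_nonneg) (simp add: qk_nonneg)

lemma kern_vanish: "\<bar>z $ i\<bar> > int (N i) \<Longrightarrow> kern N z = 0"
  unfolding kern_def by (rule prod_zero) (use qk_vanish in auto)

lemma kern_vanish_Box: "z \<notin> Box L \<Longrightarrow> sumN N \<le> L \<Longrightarrow> kern N z = 0"
proof -
  assume z: "z \<notin> Box L" and L: "sumN N \<le> L"
  then obtain i where "\<bar>z $ i\<bar> > int L" unfolding Box_iff by (auto simp: not_le)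
  moreover have "N i \<le> L" using N_le_sumN[of N i] L by simp
  ultimately show ?thesis by (intro kern_vanish[where z=z and i=i]) simp
qed

lemma kern_sum: "sumN N \<le> L \<Longrightarrow> (\<Sum>z\<in>Box L. kern N z) = 1"
proof -
  assume L: "sumN N \<le> L"
  have "(\<Sum>z\<in>Box L. kern N z) = (\<Prod>i\<in>UNIV. \<Sum>c\<in>{- int L .. int L}. qk (N i) c)"
    unfolding Box_def kern_def by (rule vset_prod_sum) simp
  also have "\<dots> = (\<Prod>i\<in>(UNIV::'a set). 1)"
  proof (rule prod.cong[OF refl])
    fix i
    have NL: "N i \<le> L" using N_le_sumN[of N i] L by simp
    have "(\<Sum>c\<in>{- int L .. int L}. qk (N i) c) = (\<Sum>c\<in>{- int (N i) .. int (N i)}. qk (N i) c)"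
      by (rule sum.mono_neutral_right) (use NL qk_vanish in auto)
    thus "(\<Sum>c\<in>{- int L .. int L}. qk (N i) c) = 1" using qk_sum_eq by simp
  qed
  finally show ?thesis by simp
qed

definition Kop :: "('d::finite \<Rightarrow> nat) \<Rightarrow> (int ^ 'd \<Rightarrow> real) \<Rightarrow> int ^ 'd \<Rightarrow> real" where
  "Kop N f x = (\<Sum>z\<in>Box (sumN N). kern N z * f (x + z))"

lemma Kop_indep: "sumN N \<le> L \<Longrightarrow> (\<Sum>z\<in>Box L. kern N z * f (x + z)) = Kop N f x"
  unfolding Kop_def
  by (rule sum.mono_neutral_right) (auto simp: Box_finite Box_mono kern_vanish_Box)

definition evec :: "'d::finite \<Rightarrow> int ^ 'd" where "evec i = axis i 1"

lemma ev_nth: "evec i $ l = (if l = i then 1 else 0)"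
  unfolding evec_def axis_def by simp

lemma shift_sum:
  fixes g :: "int ^ 'd::finite \<Rightarrow> real"
  assumes van: "\<And>z. z \<notin> Box M \<Longrightarrow> g z = 0" and e: "\<And>l. \<bar>e $ l\<bar> \<le> 1"
  shows "(\<Sum>z\<in>Box (Suc M). g z * \<phi> (z + e)) = (\<Sum>z\<in>Box (Suc M). g (z - e) * \<phi> z)"
proof -
  have "(\<Sum>z\<in>Box (Suc M). g z * \<phi> (z + e)) = (\<Sum>z\<in>Box M. g z * \<phi> (z + e))"
    by (rule sum.mono_neutral_right) (auto simp: Box_finite Box_mono van)
  also have "\<dots> = (\<Sum>w\<in>(\<lambda>z. z + e) ` Box M. g (w - e) * \<phi> w)"
    by (subst sum.reindex) (auto simp: inj_on_def)
  also have "\<dots> = (\<Sum>w\<in>Box (Suc M). g (w - e) * \<phi> w)"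
  proof (rule sum.mono_neutral_left)
    show "finite (Box (Suc M))" by (rule Box_finite)
    show "(\<lambda>z. z + e) ` Box M \<subseteq> Box (Suc M)"
    proof
      fix w assume "w \<in> (\<lambda>z. z + e) ` Box M"
      then obtain z where z: "z \<in> Box M" "w = z + e" by auto
      { fix l have "\<bar>z $ l\<bar> \<le> int M" using z(1) Box_iff by blast
        hence "\<bar>w $ l\<bar> \<le> int (Suc M)" using e[of l] z(2) by simp }
      thus "w \<in> Box (Suc M)" unfolding Box_iff by blast
    qed
    show "\<forall>w\<in>Box (Suc M) - (\<lambda>z. z + e) ` Box M. g (w - e) * \<phi> w = 0"
    proof
      fix w assume w: "w \<in> Box (Suc M) - (\<lambda>z. z + e) ` Box M"
      have "w - e \<notin> Box M"
      proof
        assume "w - e \<in> Box M"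
        hence "w \<in> (\<lambda>z. z + e) ` Box M" by (intro image_eqI[of _ _ "w - e"]) simp_all
        thus False using w by simp
      qed
      thus "g (w - e) * \<phi> w = 0" using van by simp
    qed
  qed
  finally show ?thesis .
qed

lemma kern_shift:
  "kern N (z - evec i) = qk (N i) (z $ i - 1) * (\<Prod>l\<in>UNIV - {i}. qk (N l) (z $ l))"
  "kern N (z + evec i) = qk (N i) (z $ i + 1) * (\<Prod>l\<in>UNIV - {i}. qk (N l) (z $ l))"
  "kern (N(i := Suc (N i))) z = qk (Suc (N i)) (z $ i) * (\<Prod>l\<in>UNIV - {i}. qk (N l) (z $ l))"
proof -
  have *: "\<And>h::'a \<Rightarrow> real. (\<Prod>l\<in>UNIV. h l) = h i * (\<Prod>l\<in>UNIV - {i}. h l)"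
    by (rule prod.remove) simp_all
  show "kern N (z - evec i) = qk (N i) (z $ i - 1) * (\<Prod>l\<in>UNIV - {i}. qk (N l) (z $ l))"
    unfolding kern_def by (subst *) (auto simp: ev_nth intro!: prod.cong)
  show "kern N (z + evec i) = qk (N i) (z $ i + 1) * (\<Prod>l\<in>UNIV - {i}. qk (N l) (z $ l))"
    unfolding kern_def by (subst *) (auto simp: ev_nth intro!: prod.cong)
  show "kern (N(i := Suc (N i))) z = qk (Suc (N i)) (z $ i) * (\<Prod>l\<in>UNIV - {i}. qk (N l) (z $ l))"
    unfolding kern_def by (subst *) (auto intro!: prod.cong)
qed

lemma sumN_upd: "sumN (N(i := Suc (N i))) = Suc (sumN N)"
proof -
  have *: "\<And>h::'a \<Rightarrow> nat. (\<Sum>l\<in>UNIV. h l) = h i + (\<Sum>l\<in>UNIV - {i}. h l)"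
    by (rule sum.remove) simp_all
  have "sumN (N(i := Suc (N i))) = Suc (N i) + (\<Sum>l\<in>UNIV - {i}. (N(i := Suc (N i))) l)"
    unfolding sumN_def by (subst *) simp
  also have "(\<Sum>l\<in>UNIV - {i}. (N(i := Suc (N i))) l) = (\<Sum>l\<in>UNIV - {i}. N l)"
    by (rule sum.cong) auto
  also have "Suc (N i) + (\<Sum>l\<in>UNIV - {i}. N l) = Suc (sumN N)"
    unfolding sumN_def using *[of N] by simp
  finally show ?thesis .
qed

definition Pco :: "'d::finite \<Rightarrow> (int ^ 'd \<Rightarrow> real) \<Rightarrow> int ^ 'd \<Rightarrow> real" where
  "Pco i g x = (g (x + evec i) + g (x - evec i)) / 2"

lemma ev_abs: "\<bar>evec i $ l\<bar> \<le> 1" "\<bar>(- evec i) $ l\<bar> \<le> 1" by (simp_all add: ev_nth)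

lemma Kop_step: "Pco i (Kop N f) x = Kop (N(i := Suc (N i))) f x"
proof -
  define M where "M = sumN N"
  have van: "\<And>z. z \<notin> Box M \<Longrightarrow> kern N z = 0" using kern_vanish_Box M_def by auto
  have a: "Kop N f (x + evec i) = (\<Sum>z\<in>Box (Suc M). kern N (z - evec i) * f (x + z))"
  proof -
    have 1: "Kop N f (x + evec i) = (\<Sum>z\<in>Box (Suc M). kern N z * f (x + (z + evec i)))"
      by (subst Kop_indep[symmetric, of _ "Suc M"]) (simp_all add: M_def algebra_simps)
    have 2: "(\<Sum>z\<in>Box (Suc M). kern N z * f (x + (z + evec i))) = (\<Sum>z\<in>Box (Suc M). kern N (z - evec i) * f (x + z))"
      using shift_sum[OF van ev_abs(1), where \<phi> = "\<lambda>w. f (x + w)"] by simp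
    show ?thesis using 1 2 by simp
  qed
  have b: "Kop N f (x - evec i) = (\<Sum>z\<in>Box (Suc M). kern N (z + evec i) * f (x + z))"
  proof -
    have 1: "Kop N f (x - evec i) = (\<Sum>z\<in>Box (Suc M). kern N z * f (x + (z + - evec i)))"
      by (subst Kop_indep[symmetric, of _ "Suc M"]) (simp_all add: M_def algebra_simps)
    have 2: "(\<Sum>z\<in>Box (Suc M). kern N z * f (x + (z + - evec i))) = (\<Sum>z\<in>Box (Suc M). kern N (z - - evec i) * f (x + z))"
      using shift_sum[OF van ev_abs(2), where \<phi> = "\<lambda>w. f (x + w)"] by simp
    show ?thesis using 1 2 by simp
  qed
  have "Pco i (Kop N f) x = (\<Sum>z\<in>Box (Suc M). ((kern N (z - evec i) + kern N (z + evec i)) / 2) * f (x + z))"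
    unfolding Pco_def a b by (simp add: sum.distrib[symmetric] sum_divide_distrib algebra_simps)
  also have "\<dots> = (\<Sum>z\<in>Box (Suc M). kern (N(i := Suc (N i))) z * f (x + z))"
    by (rule sum.cong[OF refl]) (simp add: kern_shift algebra_simps add_divide_distrib)
  also have "\<dots> = Kop (N(i := Suc (N i))) f x"
    unfolding Kop_def sumN_upd M_def ..
  finally show ?thesis .
qed

definition Pop :: "(int ^ 'd::finite \<Rightarrow> real) \<Rightarrow> int ^ 'd \<Rightarrow> real" where
  "Pop g x = (\<Sum>i\<in>UNIV. Pco i g x) / real CARD('d)"

fun Ecnt :: "nat \<Rightarrow> (('d::finite \<Rightarrow> nat) \<Rightarrow> real) \<Rightarrow> real" where
  "Ecnt 0 F = F (\<lambda>_. 0)"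
| "Ecnt (Suc j) F = (\<Sum>i\<in>UNIV. Ecnt j (\<lambda>N. F (N(i := Suc (N i))))) / real CARD('d)"

lemma Ecnt_add: "Ecnt j (\<lambda>N. F N + G N) = Ecnt j F + Ecnt j G"
  by (induction j arbitrary: F G) (simp_all add: sum.distrib add_divide_distrib)

lemma Ecnt_cmult: "Ecnt j (\<lambda>N. c * F N) = c * Ecnt j F"
  by (induction j arbitrary: F) (simp_all add: sum_distrib_left)

lemma Ecnt_mono: "(\<And>N. F N \<le> G N) \<Longrightarrow> Ecnt j F \<le> Ecnt j G"
proof (induction j arbitrary: F G)
  case 0 then show ?case by simp
next
  case (Suc j)
  have "(\<Sum>i\<in>UNIV. Ecnt j (\<lambda>N. F (N(i := Suc (N i))))) \<le> (\<Sum>i\<in>UNIV. Ecnt j (\<lambda>N. G (N(i := Suc (N i)))))"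
    by (rule sum_mono) (rule Suc.IH, rule Suc.prems)
  thus ?case by (simp add: divide_right_mono)
qed

lemma Ecnt_const: "Ecnt j (\<lambda>N. c) = c"
  by (induction j arbitrary: c) simp_all

lemma Ecnt_sum: "finite S \<Longrightarrow> Ecnt j (\<lambda>N. \<Sum>i\<in>S. F i N) = (\<Sum>i\<in>S. Ecnt j (F i))"
proof (induction S rule: finite_induct)
  case empty then show ?case by (simp add: Ecnt_const)
next
  case (insert a S)
  have "Ecnt j (\<lambda>N. \<Sum>i\<in>insert a S. F i N) = Ecnt j (\<lambda>N. F a N + (\<Sum>i\<in>S. F i N))"
    using insert by simp
  also have "\<dots> = Ecnt j (F a) + Ecnt j (\<lambda>N. \<Sum>i\<in>S. F i N)" by (rule Ecnt_add)
  finally show ?case using insert by simp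
qed

lemma Pco_lin: "Pco i (\<lambda>y. Ecnt j (\<lambda>N. G N y)) x = Ecnt j (\<lambda>N. Pco i (G N) x)"
proof -
  have "Ecnt j (\<lambda>N. Pco i (G N) x) = Ecnt j (\<lambda>N. (1/2) * (G N (x + evec i) + G N (x - evec i)))"
    unfolding Pco_def by simp
  also have "\<dots> = (1/2) * (Ecnt j (\<lambda>N. G N (x + evec i)) + Ecnt j (\<lambda>N. G N (x - evec i)))"
    by (simp only: Ecnt_cmult Ecnt_add)
  finally show ?thesis unfolding Pco_def by simp
qed

lemma Pop_pow: "(Pop ^^ j) f x = Ecnt j (\<lambda>N. Kop N f x)"
proof (induction j arbitrary: x)
  case 0
  have "Kop (\<lambda>_. 0) f x = f x"
  proof -
    have s: "sumN (\<lambda>_::'a. 0::nat) = 0" unfolding sumN_def by simp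
    have "kern (\<lambda>_::'a. 0) 0 = 1" unfolding kern_def by simp
    thus ?thesis unfolding Kop_def s Box_0 by simp
  qed
  then show ?case by simp
next
  case (Suc j)
  have e: "(Pop ^^ j) f = (\<lambda>y. Ecnt j (\<lambda>N. Kop N f y))" by (rule ext) (rule Suc.IH)
  have "(Pop ^^ Suc j) f x = Pop ((Pop ^^ j) f) x" by simp
  also have "\<dots> = (\<Sum>i\<in>UNIV. Pco i (\<lambda>y. Ecnt j (\<lambda>N. Kop N f y)) x) / real CARD('a)"
    unfolding e Pop_def ..
  also have "\<dots> = (\<Sum>i\<in>UNIV. Ecnt j (\<lambda>N. Kop (N(i := Suc (N i))) f x)) / real CARD('a)"
    by (simp only: Pco_lin Kop_step)
  also have "\<dots> = Ecnt (Suc j) (\<lambda>N. Kop N f x)" by simp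
  finally show ?case .
qed

definition ind :: "'a set \<Rightarrow> 'a \<Rightarrow> real" where "ind A y = (if y \<in> A then 1 else 0)"

lemma ind_01: "0 \<le> ind A y" "ind A y \<le> 1" unfolding ind_def by simp_all

lemma Kop_nonneg: "(\<And>y. f y \<ge> 0) \<Longrightarrow> Kop N f x \<ge> 0"
  unfolding Kop_def by (intro sum_nonneg mult_nonneg_nonneg kern_nonneg) auto

lemma Kop_le1: "(\<And>y. f y \<le> 1) \<Longrightarrow> Kop N f x \<le> 1"
proof -
  assume f: "\<And>y. f y \<le> 1"
  have "Kop N f x \<le> (\<Sum>z\<in>Box (sumN N). kern N z)"
    unfolding Kop_def by (rule sum_mono) (rule mult_left_le[OF f kern_nonneg])
  thus ?thesis using kern_sum[of N "sumN N"] by simp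
qed

definition blk :: "nat \<Rightarrow> int ^ 'd::finite \<Rightarrow> int ^ 'd" where
  "blk r y = (\<chi> i. (y $ i + int r) div (2 * int r))"

lemma Kop_box:
  fixes \<Lambda> :: "(int ^ 'd::finite) set"
  assumes r: "r \<ge> 1" and rho: "\<rho> \<ge> 0"
    and dens: "\<And>x::int ^ 'd. (\<forall>i. (2 * int r) dvd x $ i) \<Longrightarrow>
          real (card (\<Lambda> \<inter> box_Q x (int r))) \<le> \<rho> * real (card (box_Q x (int r)))"
  shows "Kop N (ind \<Lambda>) x \<le> \<rho> * (2 * real r) ^ CARD('d) * (\<Prod>i\<in>UNIV. 3 / sqrt (real (N i) + 1) + 2 / real r)"
proof -
  define L where "L = sumN N"
  define Z where "Z = {z \<in> Box L. x + z \<in> \<Lambda>}"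
  define Cs where "Cs = (\<lambda>i. (\<lambda>y. (y + int r) div (2 * int r)) ` {x $ i - int L .. x $ i + int L})"
  define T where "T = vset Cs"
  define bm where "bm = (\<lambda>i. bmax (N i) (x $ i) r)"
  have finZ: "finite Z" unfolding Z_def by (rule finite_subset[OF _ Box_finite]) auto
  have finC: "\<And>i. finite (Cs i)" unfolding Cs_def by simp
  have finT: "finite T" unfolding T_def by (rule vset_finite[OF finC])
  have bm_nn: "\<And>i c. bm i c \<ge> 0" unfolding bm_def using bmax_nonneg[OF r] by simp
  have "Kop N (ind \<Lambda>) x = (\<Sum>z\<in>Box L. if x + z \<in> \<Lambda> then kern N z else 0)"
    unfolding Kop_def L_def ind_def by (rule sum.cong) auto
  also have "\<dots> = (\<Sum>z\<in>Z. kern N z)"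
    unfolding Z_def by (rule sum.inter_filter[symmetric]) (rule Box_finite)
  also have "\<dots> = (\<Sum>b\<in>T. \<Sum>z\<in>{z\<in>Z. blk r (x + z) = b}. kern N z)"
  proof (rule sum.group[symmetric, OF finZ finT])
    show "(\<lambda>z. blk r (x + z)) ` Z \<subseteq> T"
    proof
      fix b assume "b \<in> (\<lambda>z. blk r (x + z)) ` Z"
      then obtain z where z: "z \<in> Z" "b = blk r (x + z)" by auto
      have "\<bar>z $ i\<bar> \<le> int L" for i using z(1) unfolding Z_def Box_iff by auto
      hence "- int L \<le> z $ i \<and> z $ i \<le> int L" for i using abs_le_iff[of "z $ i" "int L"] by auto
      hence "b $ i \<in> Cs i" for i unfolding z(2) blk_def Cs_def
        by (intro image_eqI[of _ _ "x $ i + z $ i"]) auto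
      thus "b \<in> T" unfolding T_def vset_def by simp
    qed
  qed
  also have "\<dots> \<le> (\<Sum>b\<in>T. \<rho> * (2 * real r) ^ CARD('d) * (\<Prod>i\<in>UNIV. bm i (b $ i)))"
  proof (rule sum_mono)
    fix b assume "b \<in> T"
    define S where "S = {z\<in>Z. blk r (x + z) = b}"
    define ctr where "ctr = (\<chi> i. 2 * int r * b $ i)"
    have inI: "x $ i + z $ i \<in> Iblk r (b $ i)" if "z \<in> S" for z i
      using that Iblk_iff[OF r] unfolding S_def blk_def by auto
    have "(\<Sum>z\<in>S. kern N z) \<le> (\<Sum>z\<in>S. \<Prod>i\<in>UNIV. bm i (b $ i))"
    proof (rule sum_mono)
      fix z assume z: "z \<in> S"
      show "kern N z \<le> (\<Prod>i\<in>UNIV. bm i (b $ i))"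
        unfolding kern_def
      proof (rule prod_mono)
        fix i
        have "qk (N i) ((x $ i + z $ i) - x $ i) \<le> bm i (b $ i)"
          unfolding bm_def by (rule bmax_ge[OF inI[OF z]])
        thus "0 \<le> qk (N i) (z $ i) \<and> qk (N i) (z $ i) \<le> bm i (b $ i)" by (simp add: qk_nonneg)
      qed
    qed
    also have "\<dots> = real (card S) * (\<Prod>i\<in>UNIV. bm i (b $ i))" by simp
    also have "\<dots> \<le> (\<rho> * (2 * real r) ^ CARD('d)) * (\<Prod>i\<in>UNIV. bm i (b $ i))"
    proof (rule mult_right_mono)
      show "0 \<le> (\<Prod>i\<in>UNIV. bm i (b $ i))" by (rule prod_nonneg) (simp add: bm_nn)
      have sub: "(\<lambda>z. x + z) ` S \<subseteq> \<Lambda> \<inter> box_Q ctr (int r)"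
      proof
        fix y assume "y \<in> (\<lambda>z. x + z) ` S"
        then obtain z where z: "z \<in> S" "y = x + z" by auto
        have "y \<in> \<Lambda>" using z unfolding S_def Z_def by simp
        moreover have "y \<in> box_Q ctr (int r)"
          unfolding box_Q_def ctr_def using inI[OF z(1)] z(2) unfolding Iblk_def by auto
        ultimately show "y \<in> \<Lambda> \<inter> box_Q ctr (int r)" by simp
      qed
      have finB: "finite (box_Q ctr (int r))" unfolding box_Q_vset by (rule vset_finite) simp
      have "card S = card ((\<lambda>z. x + z) ` S)" by (rule card_image[symmetric]) (simp add: inj_on_def)
      also have "\<dots> \<le> card (\<Lambda> \<inter> box_Q ctr (int r))" by (rule card_mono) (use finB sub in auto)
      finally have "real (card S) \<le> real (card (\<Lambda> \<inter> box_Q ctr (int r)))" by simp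
      also have "\<dots> \<le> \<rho> * real (card (box_Q ctr (int r)))"
        by (rule dens) (simp add: ctr_def)
      also have "real (card (box_Q ctr (int r))) = (2 * real r) ^ CARD('d)"
        using card_box_Q[of "int r" ctr] by simp
      finally show "real (card S) \<le> \<rho> * (2 * real r) ^ CARD('d)" .
    qed
    finally show "(\<Sum>z\<in>{z\<in>Z. blk r (x + z) = b}. kern N z) \<le> \<rho> * (2 * real r) ^ CARD('d) * (\<Prod>i\<in>UNIV. bm i (b $ i))"
      unfolding S_def by simp
  qed
  also have "\<dots> = \<rho> * (2 * real r) ^ CARD('d) * (\<Sum>b\<in>T. \<Prod>i\<in>UNIV. bm i (b $ i))"
    by (simp add: sum_distrib_left)
  also have "(\<Sum>b\<in>T. \<Prod>i\<in>UNIV. bm i (b $ i)) = (\<Prod>i\<in>UNIV. \<Sum>c\<in>Cs i. bm i c)"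
    unfolding T_def by (rule vset_prod_sum[OF finC])
  also have "\<rho> * (2 * real r) ^ CARD('d) * (\<Prod>i\<in>UNIV. \<Sum>c\<in>Cs i. bm i c)
      \<le> \<rho> * (2 * real r) ^ CARD('d) * (\<Prod>i\<in>UNIV. 3 / sqrt (real (N i) + 1) + 2 / real r)"
  proof (rule mult_left_mono)
    show "0 \<le> \<rho> * (2 * real r) ^ CARD('d)" using rho by simp
    show "(\<Prod>i\<in>UNIV. \<Sum>c\<in>Cs i. bm i c) \<le> (\<Prod>i\<in>UNIV. 3 / sqrt (real (N i) + 1) + 2 / real r)"
    proof (rule prod_mono)
      fix i
      show "0 \<le> (\<Sum>c\<in>Cs i. bm i c) \<and> (\<Sum>c\<in>Cs i. bm i c) \<le> 3 / sqrt (real (N i) + 1) + 2 / real r"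
        using sum_nonneg[of "Cs i" "bm i"] bm_nn block_sum[OF r finC[of i], of "N i" "x $ i"]
        unfolding bm_def by auto
    qed
  qed
  finally show ?thesis .
qed

lemma key_ineq:
  fixes a b :: real
  assumes a: "0 < a" and ab: "a \<le> b" and sq: "b^2 = a^2 + 1"
  shows "1 / b^3 \<le> 2 * (1/a - 1/b)"
proof -
  have b: "0 < b" using a ab by simp
  have "(b - a) * (b + a) = 1" using sq by (simp add: algebra_simps power2_eq_square)
  hence bma: "b - a = 1 / (b + a)" using a b by (simp add: field_simps)
  have "1/a - 1/b = (b - a) / (a * b)" using a b by (simp add: field_simps)
  also have "\<dots> = 1 / (a * b * (a + b))" unfolding bma using a b by (simp add: field_simps)
  finally have e: "1/a - 1/b = 1 / (a * b * (a + b))" .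
  have "a * b \<le> b * b" using ab b by (simp add: mult_right_mono)
  moreover have "a + b \<le> b + b" using ab by simp
  ultimately have "a * b * (a + b) \<le> b * b * (b + b)"
    using a b by (intro mult_mono) simp_all
  hence "a * b * (a + b) \<le> 2 * b^3" by (simp add: power3_eq_cube algebra_simps)
  hence "1 / (2 * b^3) \<le> 1 / (a * b * (a + b))"
    using a b by (intro divide_left_mono) (auto intro!: mult_pos_pos)
  thus ?thesis unfolding e by (simp add: field_simps)
qed

lemma tele:
  assumes n0: "n0 \<ge> 1" "n0 \<le> m"
  shows "(\<Sum>n\<in>{n0..<m}. 1 / sqrt (real n + 1) ^ 3) \<le> 2 / sqrt (real n0) - 2 / sqrt (real m)"
  using n0(2)
proof (induction m)
  case 0 then show ?case using n0 by simp
next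
  case (Suc m)
  show ?case
  proof (cases "n0 = Suc m")
    case True then show ?thesis by simp
  next
    case False
    hence m: "n0 \<le> m" using Suc.prems by simp
    have "(\<Sum>n\<in>{n0..<Suc m}. 1 / sqrt (real n + 1) ^ 3) = (\<Sum>n\<in>{n0..<m}. 1 / sqrt (real n + 1) ^ 3) + 1 / sqrt (real m + 1) ^ 3"
      using m by simp
    also have "\<dots> \<le> (2 / sqrt (real n0) - 2 / sqrt (real m)) + 2 * (1 / sqrt (real m) - 1 / sqrt (real m + 1))"
    proof (rule add_mono)
      show "(\<Sum>n\<in>{n0..<m}. 1 / sqrt (real n + 1) ^ 3) \<le> 2 / sqrt (real n0) - 2 / sqrt (real m)"
        using Suc.IH m by simp
      have "real m \<ge> 1" using m n0 by simp
      thus "1 / sqrt (real m + 1) ^ 3 \<le> 2 * (1 / sqrt (real m) - 1 / sqrt (real m + 1))"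
        by (intro key_ineq) auto
    qed
    also have "\<dots> = 2 / sqrt (real n0) - 2 / sqrt (real (Suc m))" by (simp add: algebra_simps)
    finally show ?thesis .
  qed
qed

lemma tele2:
  assumes "n0 \<ge> 1"
  shows "(\<Sum>n\<in>{n0..<m}. 1 / sqrt (real n + 1) ^ 3) \<le> 2 / sqrt (real n0)"
proof (cases "n0 \<le> m")
  case True
  have "0 \<le> 2 / sqrt (real m)" by simp
  thus ?thesis using tele[OF assms True] by linarith
next
  case False
  thus ?thesis by simp
qed

lemma tele3: "(\<Sum>n<m. 1 / sqrt (real n + 1) ^ 3) \<le> 3"
proof (cases "m = 0")
  case True then show ?thesis by simp
next
  case False
  have "{..<m} = insert 0 {1..<m}" using False by auto
  hence "(\<Sum>n<m. 1 / sqrt (real n + 1) ^ 3) = 1 + (\<Sum>n\<in>{1..<m}. 1 / sqrt (real n + 1) ^ 3)"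
    by simp
  also have "\<dots> \<le> 1 + 2 / sqrt (real 1)" using tele2[of 1 m] by simp
  finally show ?thesis by simp
qed

lemma sqrt_pow_powr: "x > 0 \<Longrightarrow> sqrt x ^ k = x powr (real k / 2)"
proof -
  assume x: "x > 0"
  have "sqrt x ^ k = (x powr (1/2)) ^ k" using x by (simp add: powr_half_sqrt)
  also have "\<dots> = x powr (real k * (1/2))" using x by (subst powr_power) simp_all
  finally show ?thesis by simp
qed

lemma series_bound:
  fixes A :: real and D :: nat
  assumes A: "A > 0" and D: "D \<ge> 3"
  shows "(\<Sum>n<m. min 1 (A / sqrt (real n + 1) ^ D)) \<le> 4 * A powr (2 / real D)"
proof -
  define t where "t = A powr (2 / real D)"
  have tpos: "t > 0" unfolding t_def using A by simp
  define n0 where "n0 = nat \<lceil>t\<rceil>"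
  have n0t: "real n0 \<ge> t" "real n0 < t + 1" unfolding n0_def using tpos by linarith+
  have n01: "n0 \<ge> 1" unfolding n0_def using tpos by linarith
  define M where "M = max m n0"
  define f where "f = (\<lambda>n. min 1 (A / sqrt (real n + 1) ^ D))"
  have fnn: "\<And>n. f n \<ge> 0" unfolding f_def using A by simp
  have split: "(\<Sum>n<m. f n) \<le> (\<Sum>n<n0. f n) + (\<Sum>n\<in>{n0..<M}. f n)"
  proof -
    have "(\<Sum>n<m. f n) \<le> (\<Sum>n<M. f n)"
      by (rule sum_mono2) (auto simp: M_def fnn)
    also have "{..<M} = {..<n0} \<union> {n0..<M}" unfolding M_def by auto
    hence "(\<Sum>n<M. f n) = (\<Sum>n<n0. f n) + (\<Sum>n\<in>{n0..<M}. f n)"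
      by (simp add: sum.union_disjoint ivl_disj_int)
    finally show ?thesis by simp
  qed
  have head: "(\<Sum>n<n0. f n) \<le> 2 * t"
  proof -
    have "(\<Sum>n<n0. f n) \<le> (\<Sum>n<n0. min 1 A)"
    proof (rule sum_mono)
      fix n
      have "sqrt (real n + 1) ^ D \<ge> 1" by (simp add: one_le_power)
      hence "A / sqrt (real n + 1) ^ D \<le> A" using A by (simp add: divide_le_eq)  
      thus "f n \<le> min 1 A" unfolding f_def by simp
    qed
    also have "\<dots> = real n0 * min 1 A" by simp
    also have "\<dots> \<le> 2 * t"
    proof (cases "A \<ge> 1")
      case True
      have "t \<ge> 1" unfolding t_def using True by (intro ge_one_powr_ge_zero) auto
      thus ?thesis using True n0t by simp
    next
      case False
      have "t \<le> 1" unfolding t_def using False A by (intro powr_le1) auto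
      hence "n0 = 1" using n0t n01 by linarith
      moreover have "A \<le> t"
        using powr_mono'[of "2 / real D" 1 A] False A D unfolding t_def by simp
      ultimately show ?thesis using False tpos by simp
    qed
    finally show ?thesis .
  qed
  have tail: "(\<Sum>n\<in>{n0..<M}. f n) \<le> 2 * t"
  proof -
    have s0: "sqrt (real n0) > 0" using n01 by simp
    have "(\<Sum>n\<in>{n0..<M}. f n) \<le> (\<Sum>n\<in>{n0..<M}. (A / sqrt (real n0) ^ (D - 3)) * (1 / sqrt (real n + 1) ^ 3))"
    proof (rule sum_mono)
      fix n assume n: "n \<in> {n0..<M}"
      have "sqrt (real n0) ^ (D - 3) \<le> sqrt (real n + 1) ^ (D - 3)"
        using n by (intro power_mono) auto
      hence "sqrt (real n0) ^ (D - 3) * sqrt (real n + 1) ^ 3 \<le> sqrt (real n + 1) ^ (D - 3) * sqrt (real n + 1) ^ 3"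
        by (intro mult_right_mono) auto
      also have "\<dots> = sqrt (real n + 1) ^ D" using D by (simp add: power_add[symmetric])
      finally have le: "sqrt (real n0) ^ (D - 3) * sqrt (real n + 1) ^ 3 \<le> sqrt (real n + 1) ^ D" .
      have "A / sqrt (real n + 1) ^ D \<le> A / (sqrt (real n0) ^ (D - 3) * sqrt (real n + 1) ^ 3)"
        using A s0 le by (intro divide_left_mono mult_pos_pos) auto
      thus "f n \<le> (A / sqrt (real n0) ^ (D - 3)) * (1 / sqrt (real n + 1) ^ 3)"
        unfolding f_def by simp
    qed
    also have "\<dots> = (A / sqrt (real n0) ^ (D - 3)) * (\<Sum>n\<in>{n0..<M}. 1 / sqrt (real n + 1) ^ 3)"
      by (simp add: sum_distrib_left)
    also have "\<dots> \<le> (A / sqrt (real n0) ^ (D - 3)) * (2 / sqrt (real n0))"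
      using A s0 by (intro mult_left_mono tele2 n01) auto
    also have "\<dots> = 2 * A / sqrt (real n0) ^ (D - 2)"
    proof -
      have "sqrt (real n0) ^ (D - 2) = sqrt (real n0) ^ (D - 3) * sqrt (real n0)"
      proof -
        have "D - 2 = Suc (D - 3)" using D by simp
        thus ?thesis by (simp only: power_Suc2)
      qed
      thus ?thesis by simp
    qed
    also have "\<dots> \<le> 2 * A / A powr (1 - 2 / real D)"
    proof -
      have "sqrt (real n0) ^ (D - 2) = real n0 powr (real (D - 2) / 2)"
        using n01 by (intro sqrt_pow_powr) simp
      also have "\<dots> \<ge> t powr (real (D - 2) / 2)"
        using n0t tpos by (intro powr_mono2) auto
      moreover have "t powr (real (D - 2) / 2) = A powr (1 - 2 / real D)"
      proof -
        have "2 / real D * (real (D - 2) / 2) = 1 - 2 / real D" using D by (simp add: field_simps of_nat_diff)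
        thus ?thesis unfolding t_def powr_powr by simp
      qed
      ultimately have "A powr (1 - 2 / real D) \<le> sqrt (real n0) ^ (D - 2)" by simp
      thus ?thesis using A s0 by (intro divide_left_mono mult_pos_pos) auto
    qed
    also have "\<dots> = 2 * t"
    proof -
      have "A powr (2 / real D) = A powr 1 / A powr (1 - 2 / real D)"
        by (subst powr_diff[symmetric]) simp
      thus ?thesis unfolding t_def using A by simp
    qed
    finally show ?thesis .
  qed
  show ?thesis using split head tail unfolding f_def t_def by simp
qed

fun beta :: "real \<Rightarrow> nat \<Rightarrow> nat \<Rightarrow> real" where
  "beta p 0 n = (if n = 0 then 1 else 0)"
| "beta p (Suc j) n = (1 - p) * beta p j n + (if n = 0 then 0 else p * beta p j (n - 1))"

lemma beta_nonneg: "0 \<le> p \<Longrightarrow> p \<le> 1 \<Longrightarrow> beta p j n \<ge> 0"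
  by (induction j arbitrary: n) auto

lemma beta_zero: "j < n \<Longrightarrow> beta p j n = 0"
  by (induction j arbitrary: n) auto

lemma beta_sum: assumes p: "0 < p" "p \<le> 1" shows "(\<Sum>j<m. beta p j n) \<le> 1 / p"
proof (induction m arbitrary: n)
  case 0 then show ?case using p by simp
next
  case (Suc m)
  have "(\<Sum>j<Suc m. beta p j n) = beta p 0 n + (\<Sum>j<m. beta p (Suc j) n)"
    by (rule sum.lessThan_Suc_shift)
  also have "(\<Sum>j<m. beta p (Suc j) n) = (1 - p) * (\<Sum>j<m. beta p j n) + (if n = 0 then 0 else p * (\<Sum>j<m. beta p j (n - 1)))"
    by (simp add: sum.distrib sum_distrib_left)
  finally have e: "(\<Sum>j<Suc m. beta p j n) = beta p 0 n + ((1 - p) * (\<Sum>j<m. beta p j n) + (if n = 0 then 0 else p * (\<Sum>j<m. beta p j (n - 1))))" .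
  have a: "(1 - p) * (\<Sum>j<m. beta p j n) \<le> (1 - p) * (1 / p)"
    using Suc.IH[of n] p by (intro mult_left_mono) auto
  have b: "p * (\<Sum>j<m. beta p j (n - 1)) \<le> p * (1 / p)"
    using Suc.IH[of "n - 1"] p by (intro mult_left_mono) auto
  show ?case
  proof (cases "n = 0")
    case True
    have "1 + (1 - p) * (1 / p) = 1 / p" using p by (simp add: field_simps)
    thus ?thesis using e a True by simp
  next
    case False
    have "(1 - p) * (1 / p) + p * (1 / p) = 1 / p" using p by (simp add: field_simps)
    thus ?thesis using e a b False by simp
  qed
qed

lemma card_pos': "real CARD('d::finite) > 0" by simp

lemma Ecnt_marg:
  fixes i :: "'d::finite"
  shows "Ecnt j (\<lambda>N. g (N i)) = (\<Sum>n\<le>j. beta (1 / real CARD('d)) j n * g n)"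
proof (induction j arbitrary: g)
  case 0 then show ?case by simp
next
  case (Suc j)
  define p where "p = 1 / real CARD('d)"
  define d where "d = real CARD('d)"
  have dpos: "d > 0" unfolding d_def by simp
  have pd: "p = 1 / d" unfolding p_def d_def ..
  define S0 where "S0 = (\<Sum>n\<le>j. beta p j n * g n)"
  define S1 where "S1 = (\<Sum>n\<le>j. beta p j n * g (Suc n))"
  have *: "\<And>h::'d \<Rightarrow> real. (\<Sum>l\<in>UNIV. h l) = h i + (\<Sum>l\<in>UNIV - {i}. h l)"
    by (rule sum.remove) simp_all
  have "(\<Sum>l\<in>UNIV. Ecnt j (\<lambda>N. g ((N(l := Suc (N l))) i)))
      = Ecnt j (\<lambda>N. g (Suc (N i))) + (\<Sum>l\<in>UNIV - {i}. Ecnt j (\<lambda>N. g (N i)))"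
    by (subst *) (auto intro!: sum.cong)
  also have "\<dots> = S1 + (d - 1) * S0"
  proof -
    have "card (UNIV - {i}) = CARD('d) - 1" by (simp add: card_Diff_singleton)
    hence "real (card (UNIV - {i})) = d - 1" unfolding d_def
      by (simp add: of_nat_diff Suc_leI)
    thus ?thesis using Suc.IH[of g] Suc.IH[of "\<lambda>n. g (Suc n)"] unfolding S0_def S1_def p_def by simp
  qed
  finally have lhs: "Ecnt (Suc j) (\<lambda>N. g (N i)) = (S1 + (d - 1) * S0) / d" unfolding d_def by simp
  have "(\<Sum>n\<le>Suc j. beta p (Suc j) n * g n)
      = (\<Sum>n\<le>Suc j. (1 - p) * (beta p j n * g n)) + (\<Sum>n\<le>Suc j. (if n = 0 then 0 else p * beta p j (n - 1) * g n))"
  proof (subst sum.distrib[symmetric], rule sum.cong[OF refl])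
    fix n
    show "beta p (Suc j) n * g n = (1 - p) * (beta p j n * g n) + (if n = 0 then 0 else p * beta p j (n - 1) * g n)"
      by (cases "n = 0") (simp_all add: algebra_simps)
  qed
  also have "(\<Sum>n\<le>Suc j. (1 - p) * (beta p j n * g n)) = (1 - p) * S0"
    unfolding S0_def by (simp add: sum_distrib_left beta_zero)
  also have "(\<Sum>n\<le>Suc j. (if n = 0 then 0 else p * beta p j (n - 1) * g n)) = p * S1"
    unfolding S1_def by (subst sum.atMost_Suc_shift) (simp add: sum_distrib_left algebra_simps)
  finally have rhs: "(\<Sum>n\<le>Suc j. beta p (Suc j) n * g n) = (1 - p) * S0 + p * S1" .
  have "(S1 + (d - 1) * S0) / d = (1 - p) * S0 + p * S1" unfolding pd using dpos by (simp add: field_simps)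
  thus ?case using lhs rhs unfolding p_def by simp
qed

lemma marg_sum:
  fixes i :: "'d::finite"
  assumes g: "\<And>n. g n \<ge> 0"
  shows "(\<Sum>j<m. Ecnt j (\<lambda>N. g (N i))) \<le> real CARD('d) * (\<Sum>n<m. g n)"
proof -
  define p where "p = 1 / real CARD('d)"
  have p: "0 < p" "p \<le> 1" unfolding p_def by (simp_all add: field_simps)
  have "(\<Sum>j<m. Ecnt j (\<lambda>N. g (N i))) = (\<Sum>j<m. \<Sum>n<m. beta p j n * g n)"
  proof (rule sum.cong[OF refl])
    fix j assume j: "j \<in> {..<m}"
    have "(\<Sum>n\<le>j. beta p j n * g n) = (\<Sum>n<m. beta p j n * g n)"
      by (rule sum.mono_neutral_left) (use j beta_zero in auto)
    thus "Ecnt j (\<lambda>N. g (N i)) = (\<Sum>n<m. beta p j n * g n)" unfolding p_def Ecnt_marg by simp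
  qed
  also have "\<dots> = (\<Sum>n<m. g n * (\<Sum>j<m. beta p j n))"
    by (subst sum.swap) (simp add: sum_distrib_left mult.commute)
  also have "\<dots> \<le> (\<Sum>n<m. g n * real CARD('d))"
  proof (rule sum_mono)
    fix n
    have "(\<Sum>j<m. beta p j n) \<le> 1 / p" by (rule beta_sum[OF p])
    also have "1 / p = real CARD('d)" unfolding p_def by simp
    finally show "g n * (\<Sum>j<m. beta p j n) \<le> g n * real CARD('d)" using g by (intro mult_left_mono) auto
  qed
  finally show ?thesis by (simp add: sum_distrib_left mult.commute)
qed

lemma prod_le_sum_pow:
  fixes m :: "'d::finite \<Rightarrow> real"
  assumes m: "\<And>i. m i \<ge> 0"
  shows "(\<Prod>i\<in>UNIV. m i) \<le> (\<Sum>i\<in>UNIV. m i ^ CARD('d))"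
proof -
  have "Max (range m) \<in> range m" by (rule Max_in) simp_all
  then obtain i0 where i0': "Max (range m) = m i0" by blast
  hence i0: "m i0 = Max (range m)" by simp
  have ge: "\<And>i. m i \<le> m i0" unfolding i0 by (rule Max_ge) simp_all
  have "(\<Prod>i\<in>UNIV. m i) \<le> (\<Prod>i\<in>(UNIV::'d set). m i0)" by (rule prod_mono) (simp add: m ge)
  also have "\<dots> = m i0 ^ CARD('d)" by simp
  also have "\<dots> \<le> (\<Sum>i\<in>UNIV. m i ^ CARD('d))"
    by (rule member_le_sum[where f = "\<lambda>i. m i ^ CARD('d)"]) (simp_all add: m)
  finally show ?thesis .
qed

lemma max_pow: "(a::real) \<ge> 0 \<Longrightarrow> (max 1 a) ^ k \<le> 1 + a ^ k"
  by (cases "a \<le> 1") (auto simp: max_def)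

lemma min_sum:
  fixes b :: "'i \<Rightarrow> real"
  assumes c: "c \<ge> 0" and b: "\<And>i. b i \<ge> 0" and S: "finite S"
  shows "min 1 (c + (\<Sum>i\<in>S. b i)) \<le> c + (\<Sum>i\<in>S. min 1 (b i))"
proof (cases "\<exists>i\<in>S. b i \<ge> 1")
  case True
  then obtain i where i: "i \<in> S" "b i \<ge> 1" by auto
  have "1 = min 1 (b i)" using i by simp
  also have "\<dots> \<le> (\<Sum>i\<in>S. min 1 (b i))" by (rule member_le_sum) (use i b S in auto)
  finally show ?thesis using c by linarith
next
  case False
  hence "(\<Sum>i\<in>S. min 1 (b i)) = (\<Sum>i\<in>S. b i)" by (intro sum.cong) auto
  thus ?thesis by simp
qed

lemma Kop_perN:
  fixes \<Lambda> :: "(int ^ 'd::finite) set"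
  assumes r: "r \<ge> 1" and rho: "\<rho> \<ge> 0"
    and dens: "\<And>x::int ^ 'd. (\<forall>i. (2 * int r) dvd x $ i) \<Longrightarrow>
          real (card (\<Lambda> \<inter> box_Q x (int r))) \<le> \<rho> * real (card (box_Q x (int r)))"
  shows "Kop N (ind \<Lambda>) x \<le> real CARD('d) * (\<rho> * 10 ^ CARD('d))
     + (\<Sum>i\<in>UNIV. min 1 ((\<rho> * 10 ^ CARD('d) * real r ^ CARD('d)) / sqrt (real (N i) + 1) ^ CARD('d)))"
proof -
  define D where "D = CARD('d)"
  define a where "a = (\<lambda>i. real r / sqrt (real (N i) + 1))"
  define m where "m = (\<lambda>i. max 1 (a i))"
  define u where "u = (\<lambda>i. 3 / sqrt (real (N i) + 1) + 2 / real r)"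
  have rpos: "real r > 0" using r by simp
  have a_nn: "\<And>i. a i \<ge> 0" unfolding a_def by simp
  have m_nn: "\<And>i. m i \<ge> 0" unfolding m_def by simp
  have u_nn: "\<And>i. u i \<ge> 0" unfolding u_def by simp
  have K1: "Kop N (ind \<Lambda>) x \<le> min 1 (\<rho> * (2 * real r) ^ D * (\<Prod>i\<in>UNIV. u i))"
  proof -
    have "Kop N (ind \<Lambda>) x \<le> 1" by (rule Kop_le1) (rule ind_01(2))
    thus ?thesis using Kop_box[OF r rho dens, of N x] unfolding u_def D_def by simp
  qed
  have "(2 * real r) ^ D * (\<Prod>i\<in>UNIV. u i) = (\<Prod>i\<in>UNIV. 2 * real r * u i)"
    unfolding D_def by (simp add: prod.distrib)
  also have "\<dots> \<le> (\<Prod>i\<in>(UNIV::'d set). 10 * m i)"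
  proof (rule prod_mono)
    fix i
    have "2 * real r * u i = 6 * a i + 4" unfolding u_def a_def using rpos by (simp add: field_simps)
    also have "\<dots> \<le> 10 * m i" unfolding m_def by (simp add: max_def)
    finally show "0 \<le> 2 * real r * u i \<and> 2 * real r * u i \<le> 10 * m i" using u_nn[of i] rpos by simp
  qed
  also have "\<dots> = 10 ^ D * (\<Prod>i\<in>UNIV. m i)" unfolding D_def by (simp add: prod.distrib)
  also have "(\<Prod>i\<in>UNIV. m i) \<le> (\<Sum>i\<in>UNIV. m i ^ D)" unfolding D_def by (rule prod_le_sum_pow[OF m_nn])
  also have "\<dots> \<le> (\<Sum>i\<in>(UNIV::'d set). 1 + a i ^ D)" unfolding m_def by (rule sum_mono) (rule max_pow[OF a_nn])
  finally have "(2 * real r) ^ D * (\<Prod>i\<in>UNIV. u i) \<le> 10 ^ D * (\<Sum>i\<in>(UNIV::'d set). 1 + a i ^ D)"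
    by simp
  hence "\<rho> * (2 * real r) ^ D * (\<Prod>i\<in>UNIV. u i) \<le> \<rho> * (10 ^ D * (\<Sum>i\<in>(UNIV::'d set). 1 + a i ^ D))"
    using rho by (simp add: mult.assoc mult_left_mono)
  also have "\<dots> = real D * (\<rho> * 10 ^ D) + (\<Sum>i\<in>UNIV. \<rho> * 10 ^ D * a i ^ D)"
    unfolding D_def by (simp add: sum.distrib sum_distrib_left sum_distrib_right algebra_simps)
  finally have K2: "min 1 (\<rho> * (2 * real r) ^ D * (\<Prod>i\<in>UNIV. u i)) \<le> min 1 (real D * (\<rho> * 10 ^ D) + (\<Sum>i\<in>UNIV. \<rho> * 10 ^ D * a i ^ D))"
    by simp
  also have "\<dots> \<le> real D * (\<rho> * 10 ^ D) + (\<Sum>i\<in>UNIV. min 1 (\<rho> * 10 ^ D * a i ^ D))"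
    by (rule min_sum) (use rho a_nn in auto)
  also have "(\<Sum>i\<in>UNIV. min 1 (\<rho> * 10 ^ D * a i ^ D)) = (\<Sum>i\<in>UNIV. min 1 ((\<rho> * 10 ^ D * real r ^ D) / sqrt (real (N i) + 1) ^ D))"
    unfolding a_def by (simp add: power_divide)
  finally have K3: "min 1 (\<rho> * (2 * real r) ^ D * (\<Prod>i\<in>UNIV. u i)) \<le> real D * (\<rho> * 10 ^ D) + (\<Sum>i\<in>UNIV. min 1 ((\<rho> * 10 ^ D * real r ^ D) / sqrt (real (N i) + 1) ^ D))" .
  show ?thesis using order_trans[OF K1 K3] unfolding D_def .
qed

lemma sum_prod_le: "(a::real) \<ge> 0 \<Longrightarrow> b \<ge> 0 \<Longrightarrow> x \<ge> 0 \<Longrightarrow> y \<ge> 0 \<Longrightarrow> a * x + b * y \<le> (a + b) * (x + y)"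
proof -
  assume h: "a \<ge> 0" "b \<ge> 0" "x \<ge> 0" "y \<ge> 0"
  have "(a + b) * (x + y) = a * x + b * y + (a * y + b * x)" by (simp add: algebra_simps)
  moreover have "a * y \<ge> 0" "b * x \<ge> 0" using h by simp_all
  ultimately show ?thesis by linarith
qed

lemma A_powr:
  assumes rho: "\<rho> > 0" and r: "r \<ge> 1" and D: "D \<ge> 1"
  shows "(\<rho> * 10 ^ D * real r ^ D) powr (2 / real D) = 100 * \<rho> powr (2 / real D) * real r ^ 2"
proof -
  have p10: "(10 ^ D :: real) powr (2 / real D) = 100"
  proof -
    have "(10 ^ D :: real) = 10 powr real D" by (simp add: powr_realpow)
    hence "(10 ^ D :: real) powr (2 / real D) = 10 powr (real D * (2 / real D))" by (simp add: powr_powr)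
    also have "real D * (2 / real D) = 2" using D by simp
    finally show ?thesis by simp
  qed
  have pr: "(real r ^ D) powr (2 / real D) = real r ^ 2"
  proof -
    have "real r ^ D = real r powr real D" using r by (simp add: powr_realpow)
    hence "(real r ^ D) powr (2 / real D) = real r powr (real D * (2 / real D))" by (simp add: powr_powr)
    also have "real D * (2 / real D) = 2" using D by simp
    finally show ?thesis using r by (simp add: powr_realpow)
  qed
  show ?thesis using rho r by (simp add: powr_mult p10 pr)
qed

lemma Loc_bound:
  fixes \<Lambda> :: "(int ^ 'd::finite) set"
  assumes r: "r \<ge> 1" and rho: "\<rho> > 0" and D: "CARD('d) \<ge> 3"
    and dens: "\<And>x::int ^ 'd. (\<forall>i. (2 * int r) dvd x $ i) \<Longrightarrow>
          real (card (\<Lambda> \<inter> box_Q x (int r))) \<le> \<rho> * real (card (box_Q x (int r)))"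
  shows "(\<Sum>j<m. (Pop ^^ j) (ind \<Lambda>) x) \<le>
     (real CARD('d) * 10 ^ CARD('d) + 400 * real CARD('d) ^ 2) * (\<rho> * real m + \<rho> powr (2 / real CARD('d)) * real r ^ 2)"
proof -
  define D where "D = CARD('d)"
  define A where "A = \<rho> * 10 ^ D * real r ^ D"
  define h where "h = (\<lambda>n::nat. min 1 (A / sqrt (real n + 1) ^ D))"
  define c0 where "c0 = real D * (\<rho> * 10 ^ D)"
  have Apos: "A > 0" unfolding A_def using rho r by simp
  have h_nn: "\<And>n. h n \<ge> 0" unfolding h_def using Apos by simp
  have "(\<Sum>j<m. (Pop ^^ j) (ind \<Lambda>) x) = (\<Sum>j<m. Ecnt j (\<lambda>N. Kop N (ind \<Lambda>) x))"
    by (simp add: Pop_pow)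
  also have "\<dots> \<le> (\<Sum>j<m. Ecnt j (\<lambda>N. c0 + (\<Sum>i\<in>(UNIV::'d set). h (N i))))"
  proof (rule sum_mono)
    fix j
    show "Ecnt j (\<lambda>N. Kop N (ind \<Lambda>) x) \<le> Ecnt j (\<lambda>N. c0 + (\<Sum>i\<in>(UNIV::'d set). h (N i)))"
    proof (rule Ecnt_mono)
      fix N
      show "Kop N (ind \<Lambda>) x \<le> c0 + (\<Sum>i\<in>(UNIV::'d set). h (N i))"
        using Kop_perN[OF r less_imp_le[OF rho] dens, of N x] unfolding c0_def h_def A_def D_def .
    qed
  qed
  also have "\<dots> = (\<Sum>j<m. c0 + (\<Sum>i\<in>(UNIV::'d set). Ecnt j (\<lambda>N. h (N i))))"
    by (simp add: Ecnt_add Ecnt_const Ecnt_sum)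
  also have "\<dots> = real m * c0 + (\<Sum>i\<in>(UNIV::'d set). \<Sum>j<m. Ecnt j (\<lambda>N. h (N i)))"
    by (simp add: sum.distrib sum.swap[of _ "{..<m}"])
  also have "\<dots> \<le> real m * c0 + (\<Sum>i\<in>(UNIV::'d set). real D * (\<Sum>n<m. h n))"
    unfolding D_def by (intro add_left_mono sum_mono marg_sum h_nn)
  also have "\<dots> = real m * c0 + real D * real D * (\<Sum>n<m. h n)" unfolding D_def by simp
  also have "\<dots> \<le> real m * c0 + real D * real D * (4 * A powr (2 / real D))"
    unfolding h_def using series_bound[OF Apos, of D m] D unfolding D_def by (intro add_left_mono mult_left_mono) auto
  also have "A powr (2 / real D) = 100 * \<rho> powr (2 / real D) * real r ^ 2"
    unfolding A_def using A_powr[OF rho r, of D] D unfolding D_def by simp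
  finally have "(\<Sum>j<m. (Pop ^^ j) (ind \<Lambda>) x) \<le> real m * c0 + real D * real D * (4 * (100 * \<rho> powr (2 / real D) * real r ^ 2))" .
  also have "\<dots> \<le> (real D * 10 ^ D + 400 * real D ^ 2) * (\<rho> * real m + \<rho> powr (2 / real D) * real r ^ 2)"
  proof -
    have x1: "0 \<le> \<rho> * real m" using rho by simp
    have x2: "0 \<le> \<rho> powr (2 / real D) * real r ^ 2" by simp
    have x3: "0 \<le> real D * 10 ^ D" "0 \<le> 400 * real D ^ 2" by simp_all
    have e1: "real m * c0 = (real D * 10 ^ D) * (\<rho> * real m)" unfolding c0_def by (simp add: algebra_simps)
    have e2: "real D * real D * (4 * (100 * \<rho> powr (2 / real D) * real r ^ 2)) = (400 * real D ^ 2) * (\<rho> powr (2 / real D) * real r ^ 2)"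
      by (simp add: algebra_simps power2_eq_square)
    show ?thesis unfolding e1 e2 by (rule sum_prod_le[OF x3 x1 x2])
  qed
  finally show ?thesis unfolding D_def .
qed

lemma Pop_const: "Pop (\<lambda>_. c) x = c"
  unfolding Pop_def Pco_def by simp

lemma Pop_mono: "(\<And>y. g y \<le> h y) \<Longrightarrow> Pop g x \<le> Pop h x"
  unfolding Pop_def Pco_def by (intro divide_right_mono sum_mono) (auto intro: add_mono)

lemma Pop_add: "Pop (\<lambda>y. g y + h y) x = Pop g x + Pop h x"
  unfolding Pop_def Pco_def by (simp add: sum.distrib add_divide_distrib algebra_simps)

lemma Pop_cmult: "Pop (\<lambda>y. c * g y) x = c * Pop g x"
  unfolding Pop_def Pco_def by (simp add: sum_distrib_left algebra_simps)

lemma Pop_sum: "finite S \<Longrightarrow> Pop (\<lambda>y. \<Sum>j\<in>S. g j y) x = (\<Sum>j\<in>S. Pop (g j) x)"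
proof (induction S rule: finite_induct)
  case empty then show ?case by (simp add: Pop_const)
next
  case (insert a S)
  have "Pop (\<lambda>y. \<Sum>j\<in>insert a S. g j y) x = Pop (\<lambda>y. g a y + (\<Sum>j\<in>S. g j y)) x"
    using insert by simp
  also have "\<dots> = Pop (g a) x + Pop (\<lambda>y. \<Sum>j\<in>S. g j y) x" by (rule Pop_add)
  finally show ?case using insert by simp
qed

lemma Pop_nonneg: "(\<And>y. g y \<ge> 0) \<Longrightarrow> Pop g x \<ge> 0"
  using Pop_mono[of "\<lambda>_. 0" g x] by (simp add: Pop_const)

lemma Pop_pow_nonneg: "(\<And>y. g y \<ge> 0) \<Longrightarrow> (Pop ^^ j) g x \<ge> 0"
proof (induction j arbitrary: x)
  case 0 then show ?case by simp
next
  case (Suc j) then show ?case by (simp add: Pop_nonneg)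
qed

definition Loc :: "(int ^ 'd::finite) set \<Rightarrow> nat \<Rightarrow> int ^ 'd \<Rightarrow> real" where
  "Loc \<Lambda> m x = (\<Sum>j<m. (Pop ^^ j) (ind \<Lambda>) x)"

lemma Loc_mono: "m \<le> m' \<Longrightarrow> Loc \<Lambda> m x \<le> Loc \<Lambda> m' x"
  unfolding Loc_def by (rule sum_mono2) (auto intro: Pop_pow_nonneg ind_01)

lemma Loc_nonneg: "Loc \<Lambda> m x \<ge> 0"
  unfolding Loc_def by (rule sum_nonneg) (auto intro: Pop_pow_nonneg ind_01)

lemma Loc_0: "Loc \<Lambda> 0 x = 0" unfolding Loc_def by simp

lemma Loc_Suc: "Loc \<Lambda> (Suc m) x = ind \<Lambda> x + Pop (Loc \<Lambda> m) x"
proof -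
  have "Loc \<Lambda> (Suc m) x = (Pop ^^ 0) (ind \<Lambda>) x + (\<Sum>j<m. (Pop ^^ Suc j) (ind \<Lambda>) x)"
    unfolding Loc_def by (rule sum.lessThan_Suc_shift)
  also have "(\<Sum>j<m. (Pop ^^ Suc j) (ind \<Lambda>) x) = (\<Sum>j<m. Pop ((Pop ^^ j) (ind \<Lambda>)) x)" by simp
  also have "\<dots> = Pop (Loc \<Lambda> m) x"
    unfolding Loc_def by (rule Pop_sum[symmetric]) simp
  finally show ?thesis by simp
qed

definition Top :: "real \<Rightarrow> (int ^ 'd::finite) set \<Rightarrow> (int ^ 'd \<Rightarrow> real) \<Rightarrow> int ^ 'd \<Rightarrow> real" where
  "Top lam \<Lambda> g x = exp (lam * ind \<Lambda> x) * Pop g x"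

definition Fk :: "real \<Rightarrow> (int ^ 'd::finite) set \<Rightarrow> nat \<Rightarrow> int ^ 'd \<Rightarrow> real" where
  "Fk lam \<Lambda> m = (Top lam \<Lambda> ^^ m) (\<lambda>_. 1)"

lemma Top_pow_mono: "(\<And>y. g y \<le> h y) \<Longrightarrow> (Top lam \<Lambda> ^^ a) g x \<le> (Top lam \<Lambda> ^^ a) h x"
proof (induction a arbitrary: x)
  case 0 then show ?case by simp
next
  case (Suc a)
  have "(Top lam \<Lambda> ^^ Suc a) g x = exp (lam * ind \<Lambda> x) * Pop ((Top lam \<Lambda> ^^ a) g) x"
    by (simp add: Top_def)
  also have "\<dots> \<le> exp (lam * ind \<Lambda> x) * Pop ((Top lam \<Lambda> ^^ a) h) x"
    by (intro mult_left_mono Pop_mono Suc.IH Suc.prems) simp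
  also have "\<dots> = (Top lam \<Lambda> ^^ Suc a) h x" by (simp add: Top_def)
  finally show ?case .
qed

lemma Top_pow_cmult: "(Top lam \<Lambda> ^^ a) (\<lambda>y. c * g y) x = c * (Top lam \<Lambda> ^^ a) g x"
proof (induction a arbitrary: x)
  case 0 then show ?case by simp
next
  case (Suc a)
  have e: "(Top lam \<Lambda> ^^ a) (\<lambda>y. c * g y) = (\<lambda>y. c * (Top lam \<Lambda> ^^ a) g y)"
    by (rule ext) (rule Suc.IH)
  have "(Top lam \<Lambda> ^^ Suc a) (\<lambda>y. c * g y) x = Top lam \<Lambda> ((Top lam \<Lambda> ^^ a) (\<lambda>y. c * g y)) x"
    by simp
  also have "\<dots> = Top lam \<Lambda> (\<lambda>y. c * (Top lam \<Lambda> ^^ a) g y) x" by (simp only: e)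
  also have "\<dots> = c * Top lam \<Lambda> ((Top lam \<Lambda> ^^ a) g) x" unfolding Top_def by (simp only: Pop_cmult) simp
  finally show ?case by simp
qed

lemma Fk_nonneg: "Fk lam \<Lambda> m x \<ge> 0"
proof (induction m arbitrary: x)
  case 0 then show ?case by (simp add: Fk_def)
next
  case (Suc m)
  have "(Top lam \<Lambda> ^^ Suc m) (\<lambda>_. 1) x = Top lam \<Lambda> (Fk lam \<Lambda> m) x" by (simp add: Fk_def)
  also have "\<dots> \<ge> 0" unfolding Top_def using Suc.IH by (intro mult_nonneg_nonneg Pop_nonneg) auto
  finally show ?case by (simp add: Fk_def)
qed

lemma Fk_block:
  assumes "\<And>y. Fk lam \<Lambda> b y \<le> Bb"
  shows "Fk lam \<Lambda> (a + b) x \<le> Bb * Fk lam \<Lambda> a x"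
proof -
  have "Fk lam \<Lambda> (a + b) x = (Top lam \<Lambda> ^^ a) (Fk lam \<Lambda> b) x"
    unfolding Fk_def by (simp add: funpow_add)
  also have "\<dots> \<le> (Top lam \<Lambda> ^^ a) (\<lambda>y. Bb * 1) x"
    by (rule Top_pow_mono) (simp add: assms)
  also have "\<dots> = Bb * Fk lam \<Lambda> a x" unfolding Fk_def by (rule Top_pow_cmult)
  finally show ?thesis .
qed

lemma exp_ind: "lam \<ge> 0 \<Longrightarrow> exp (lam * ind \<Lambda> x) = 1 + (exp lam - 1) * ind \<Lambda> x"
  unfolding ind_def by simp

lemma FK_one:
  assumes lam: "lam \<ge> 0" and A: "\<And>x. Loc \<Lambda> M x \<le> A" and th: "(exp lam - 1) * A < 1"
  shows "Fk lam \<Lambda> M x \<le> 1 / (1 - (exp lam - 1) * A)"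
proof -
  define c where "c = exp lam - 1"
  define B where "B = 1 / (1 - c * A)"
  have c0: "c \<ge> 0" unfolding c_def using lam by simp
  have th': "c * A < 1" using th unfolding c_def .
  have Bpos: "B > 0" unfolding B_def using th' by simp
  have BB: "1 + B * (c * A) = B" unfolding B_def using th' by (simp add: field_simps)
  have claim: "\<forall>x. Fk lam \<Lambda> m x \<le> 1 + B * c * Loc \<Lambda> m x" if "m \<le> M" for m
    using that
  proof (induction m)
    case 0 then show ?case by (simp add: Fk_def Loc_0)
  next
    case (Suc m)
    have IH: "\<And>x. Fk lam \<Lambda> m x \<le> 1 + B * c * Loc \<Lambda> m x" using Suc by simp
    have FB: "\<And>y. Fk lam \<Lambda> m y \<le> B"
    proof -
      fix y
      have "Loc \<Lambda> m y \<le> A" using Loc_mono[of m M \<Lambda> y] A[of y] Suc.prems by simp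
      hence "B * c * Loc \<Lambda> m y \<le> B * c * A" using Bpos c0 by (intro mult_left_mono) auto
      thus "Fk lam \<Lambda> m y \<le> B" using IH[of y] BB by (simp add: algebra_simps)
    qed
    show ?case
    proof
      fix x
      have "Fk lam \<Lambda> (Suc m) x = (1 + c * ind \<Lambda> x) * Pop (Fk lam \<Lambda> m) x"
        by (simp add: Fk_def Top_def exp_ind[OF lam] c_def)
      also have "\<dots> = Pop (Fk lam \<Lambda> m) x + c * ind \<Lambda> x * Pop (Fk lam \<Lambda> m) x"
        by (simp add: algebra_simps)
      also have "\<dots> \<le> Pop (\<lambda>y. 1 + B * c * Loc \<Lambda> m y) x + c * ind \<Lambda> x * B"
      proof (rule add_mono)
        show "Pop (Fk lam \<Lambda> m) x \<le> Pop (\<lambda>y. 1 + B * c * Loc \<Lambda> m y) x" by (rule Pop_mono) (rule IH)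
        have "Pop (Fk lam \<Lambda> m) x \<le> Pop (\<lambda>_. B) x" by (rule Pop_mono) (rule FB)
        hence "Pop (Fk lam \<Lambda> m) x \<le> B" by (simp add: Pop_const)
        thus "c * ind \<Lambda> x * Pop (Fk lam \<Lambda> m) x \<le> c * ind \<Lambda> x * B"
          using c0 ind_01 by (intro mult_left_mono mult_nonneg_nonneg) auto
      qed
      also have "Pop (\<lambda>y. 1 + B * c * Loc \<Lambda> m y) x = 1 + B * c * Pop (Loc \<Lambda> m) x"
        by (simp add: Pop_add Pop_const Pop_cmult)
      also have "1 + B * c * Pop (Loc \<Lambda> m) x + c * ind \<Lambda> x * B = 1 + B * c * Loc \<Lambda> (Suc m) x"
        by (simp add: Loc_Suc algebra_simps)
      finally show "Fk lam \<Lambda> (Suc m) x \<le> 1 + B * c * Loc \<Lambda> (Suc m) x" .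
    qed
  qed
  have "Fk lam \<Lambda> M x \<le> 1 + B * c * Loc \<Lambda> M x" using claim[of M] by simp
  also have "\<dots> \<le> 1 + B * (c * A)" using A[of x] Bpos c0 by (simp add: mult.assoc mult_left_mono)
  also have "\<dots> = B" by (rule BB)
  finally show ?thesis unfolding B_def c_def .
qed

lemma inv_le_exp: "0 \<le> (th::real) \<Longrightarrow> th \<le> 1/2 \<Longrightarrow> 1 / (1 - th) \<le> exp (2 * th)"
proof -
  assume h: "0 \<le> th" "th \<le> 1/2"
  have "1 + 2 * th \<le> exp (2 * th)" by (rule exp_ge_add_one_self_aux) (use h in simp)
  hence m: "(1 - th) * (1 + 2 * th) \<le> (1 - th) * exp (2 * th)" using h by (intro mult_left_mono) auto
  have "th * (1 - 2 * th) \<ge> 0" using h by (intro mult_nonneg_nonneg) auto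
  moreover have "(1 - th) * (1 + 2 * th) = 1 + th * (1 - 2 * th)" by (simp add: algebra_simps)
  ultimately have "1 \<le> (1 - th) * (1 + 2 * th)" by simp
  hence "1 \<le> (1 - th) * exp (2 * th)" using m by simp
  thus ?thesis using h by (simp add: field_simps)
qed

lemma FK_general:
  assumes lam: "lam \<ge> 0" and a: "a \<ge> 0" and b: "b \<ge> 0" and m0: "m0 \<ge> 1"
    and Lb: "\<And>m x. Loc \<Lambda> m x \<le> a * real m + b"
    and small: "(exp lam - 1) * (a * real m0 + b) \<le> 1/2"
  shows "Fk lam \<Lambda> N x \<le> exp (2 * (exp lam - 1) * (a * real N + (real (N div m0) + 1) * b))"
proof -
  define c where "c = exp lam - 1"
  have c0: "c \<ge> 0" unfolding c_def using lam by simp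
  have Bm: "Fk lam \<Lambda> m y \<le> exp (2 * (c * (a * real m + b)))" if "m \<le> m0" for m y
  proof -
    have th: "c * (a * real m + b) \<le> 1/2"
    proof -
      have "c * (a * real m + b) \<le> c * (a * real m0 + b)"
        using that a c0 by (intro mult_left_mono add_right_mono) auto
      thus ?thesis using small unfolding c_def by simp
    qed
    have "Fk lam \<Lambda> m y \<le> 1 / (1 - c * (a * real m + b))"
      unfolding c_def by (rule FK_one[OF lam Lb]) (use th c_def in simp)
    also have "\<dots> \<le> exp (2 * (c * (a * real m + b)))"
      by (rule inv_le_exp) (use th c0 a b in auto)
    finally show ?thesis .
  qed
  have main: "\<forall>y. Fk lam \<Lambda> (q * m0 + s) y \<le> exp (2 * c * (a * real (q * m0 + s) + (real q + 1) * b))"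
    if "s < m0" for q s
  proof (induction q)
    case 0 then show ?case using Bm[of s] that by (simp add: algebra_simps)
  next
    case (Suc q)
    show ?case
    proof
      fix y
      have "Fk lam \<Lambda> (m0 + (q * m0 + s)) y \<le> exp (2 * c * (a * real (q * m0 + s) + (real q + 1) * b)) * Fk lam \<Lambda> m0 y"
        by (rule Fk_block) (use Suc.IH in simp)
      also have "\<dots> \<le> exp (2 * c * (a * real (q * m0 + s) + (real q + 1) * b)) * exp (2 * (c * (a * real m0 + b)))"
        by (intro mult_left_mono Bm) simp_all
      also have "\<dots> = exp (2 * c * (a * real (Suc q * m0 + s) + (real (Suc q) + 1) * b))"
        by (simp add: exp_add[symmetric] algebra_simps)
      finally show "Fk lam \<Lambda> (Suc q * m0 + s) y \<le> exp (2 * c * (a * real (Suc q * m0 + s) + (real (Suc q) + 1) * b))"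
        by (simp add: algebra_simps)
    qed
  qed
  have "N = (N div m0) * m0 + N mod m0" by simp
  moreover have "N mod m0 < m0" using m0 by simp
  ultimately show ?thesis using main[of "N mod m0" "N div m0"] unfolding c_def by metis
qed

lemma axis_neg: "axis i (-1::int) = - evec i"
  unfolding evec_def axis_def by (simp add: vec_eq_iff)

lemma steps_eq: "srw_steps = range (\<lambda>i. evec i) \<union> range (\<lambda>i. - evec i)"
  unfolding srw_steps_def by (auto simp: evec_def axis_neg)

lemma steps_finite: "finite (srw_steps :: (int ^ 'd::finite) set)"
  unfolding steps_eq by simp

lemma steps_ne: "(srw_steps :: (int ^ 'd::finite) set) \<noteq> {}"
  unfolding steps_eq by simp

lemma evec_inj: "inj (\<lambda>i::'d::finite. evec i)"
  by (auto simp: inj_on_def evec_def axis_eq_axis)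

lemma nevec_inj: "inj (\<lambda>i::'d::finite. - evec i)"
  by (auto simp: inj_on_def evec_def axis_eq_axis)

lemma evec_disj: "range (\<lambda>i::'d::finite. evec i) \<inter> range (\<lambda>i. - evec i) = {}"
proof -
  { fix i j :: 'd assume "evec i = - evec j"
    hence "evec i $ i = (- evec j) $ i" by simp
    hence False by (auto simp: ev_nth split: if_splits) }
  thus ?thesis by auto
qed

lemma steps_sum: "(\<Sum>e\<in>(srw_steps :: (int ^ 'd::finite) set). h e) = (\<Sum>i\<in>UNIV. h (evec i)) + (\<Sum>i\<in>UNIV. h (- evec i))"
proof -
  have "(\<Sum>e\<in>srw_steps. h e) = (\<Sum>e\<in>range (\<lambda>i::'d. evec i). h e) + (\<Sum>e\<in>range (\<lambda>i::'d. - evec i). h e)"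
    unfolding steps_eq by (rule sum.union_disjoint) (simp_all add: evec_disj)
  also have "(\<Sum>e\<in>range (\<lambda>i::'d. evec i). h e) = (\<Sum>i\<in>UNIV. h (evec i))"
    by (subst sum.reindex[OF evec_inj]) simp
  also have "(\<Sum>e\<in>range (\<lambda>i::'d. - evec i). h e) = (\<Sum>i\<in>UNIV. h (- evec i))"
    by (subst sum.reindex[OF nevec_inj]) simp
  finally show ?thesis .
qed

lemma steps_card: "card (srw_steps :: (int ^ 'd::finite) set) = 2 * CARD('d)"
proof -
  have "card (srw_steps :: (int ^ 'd::finite) set) = (\<Sum>e\<in>(srw_steps :: (int ^ 'd::finite) set). 1)"
    by (rule card_eq_sum)
  also have "\<dots> = (\<Sum>i\<in>(UNIV::'d set). 1) + (\<Sum>i\<in>(UNIV::'d set). 1)" by (rule steps_sum)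
  finally show ?thesis by simp
qed

lemma exp_step: "measure_pmf.expectation (pmf_of_set srw_steps) (\<lambda>e. g (z + e)) = Pop g (z :: int ^ 'd::finite)"
proof -
  have "measure_pmf.expectation (pmf_of_set srw_steps) (\<lambda>e. g (z + e)) = (\<Sum>e\<in>srw_steps. g (z + e)) / card (srw_steps :: (int ^ 'd) set)"
    by (rule integral_pmf_of_set[OF steps_ne steps_finite])
  also have "\<dots> = ((\<Sum>i\<in>UNIV. g (z + evec i)) + (\<Sum>i\<in>UNIV. g (z - evec i))) / (2 * real CARD('d))"
    by (simp add: steps_sum steps_card)
  also have "\<dots> = Pop g z"
  proof -
    have "(\<Sum>i\<in>UNIV. Pco i g z) = ((\<Sum>i\<in>UNIV. g (z + evec i)) + (\<Sum>i\<in>UNIV. g (z - evec i))) / 2"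
      unfolding Pco_def by (simp only: sum_divide_distrib[symmetric] sum.distrib)
    thus ?thesis unfolding Pop_def by (simp only: divide_divide_eq_left mult.commute)
  qed
  finally show ?thesis .
qed

lemma srw_fin: "finite (set_pmf (srw_increments n :: (nat \<Rightarrow> int ^ 'd::finite) pmf))"
proof -
  have "set_pmf (srw_increments n :: (nat \<Rightarrow> int ^ 'd) pmf) \<subseteq> PiE_dflt {..<n} 0 (set_pmf \<circ> (\<lambda>_. pmf_of_set srw_steps))"
    unfolding srw_increments_def by (rule set_Pi_pmf_subset') simp
  moreover have "finite (PiE_dflt {..<n} (0 :: int ^ 'd) (set_pmf \<circ> (\<lambda>_. pmf_of_set (srw_steps :: (int ^ 'd) set))))"
    by (rule finite_PiE_dflt) (simp_all add: steps_finite steps_ne)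
  ultimately show ?thesis by (rule finite_subset)
qed

lemma exp_pair:
  fixes \<phi> :: "'a \<times> 'b \<Rightarrow> real"
  assumes A: "finite (set_pmf A)" and B: "finite (set_pmf B)"
  shows "measure_pmf.expectation (pair_pmf A B) \<phi> = measure_pmf.expectation B (\<lambda>b. measure_pmf.expectation A (\<lambda>a. \<phi> (a, b)))"
proof -
  have "measure_pmf.expectation (pair_pmf A B) \<phi> = (\<Sum>ab\<in>set_pmf A \<times> set_pmf B. \<phi> ab * pmf (pair_pmf A B) ab)"
    by (rule integral_measure_pmf_real) (use A B in auto)
  also have "\<dots> = (\<Sum>(a, b)\<in>set_pmf A \<times> set_pmf B. \<phi> (a, b) * (pmf A a * pmf B b))"
    by (rule sum.cong) (auto simp: pmf_pair)
  also have "\<dots> = (\<Sum>a\<in>set_pmf A. \<Sum>b\<in>set_pmf B. \<phi> (a, b) * (pmf A a * pmf B b))"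
    by (rule sum.cartesian_product[symmetric])
  also have "\<dots> = (\<Sum>b\<in>set_pmf B. \<Sum>a\<in>set_pmf A. \<phi> (a, b) * (pmf A a * pmf B b))"
    by (rule sum.swap)
  also have "\<dots> = (\<Sum>b\<in>set_pmf B. (\<Sum>a\<in>set_pmf A. \<phi> (a, b) * pmf A a) * pmf B b)"
    by (simp only: sum_distrib_right mult.assoc)
  also have "\<dots> = measure_pmf.expectation B (\<lambda>b. measure_pmf.expectation A (\<lambda>a. \<phi> (a, b)))"
  proof -
    have "\<And>b. measure_pmf.expectation A (\<lambda>a. \<phi> (a, b)) = (\<Sum>a\<in>set_pmf A. \<phi> (a, b) * pmf A a)"
      by (rule integral_measure_pmf_real) (use A in auto)
    moreover have "measure_pmf.expectation B (\<lambda>b. measure_pmf.expectation A (\<lambda>a. \<phi> (a, b)))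
        = (\<Sum>b\<in>set_pmf B. measure_pmf.expectation A (\<lambda>a. \<phi> (a, b)) * pmf B b)"
      by (rule integral_measure_pmf_real) (use B in auto)
    ultimately show ?thesis by simp
  qed
  finally show ?thesis .
qed

lemma srw_incr_Suc:
  "srw_increments (Suc n) = map_pmf (\<lambda>(y, f). f(n := y)) (pair_pmf (pmf_of_set srw_steps) (srw_increments n))"
  unfolding srw_increments_def lessThan_Suc by (rule Pi_pmf_insert) simp_all

lemma srw_pos_upd: "k \<le> n \<Longrightarrow> srw_pos (f(n := y)) k = srw_pos f k"
  unfolding srw_pos_def by (rule sum.cong) auto

lemma srw_pos_upd_Suc: "srw_pos (f(n := y)) (Suc n) = srw_pos f n + y"
  using srw_pos_upd[of n n f y] unfolding srw_pos_def by (simp add: algebra_simps)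

lemma H_lemma:
  "measure_pmf.expectation (srw_increments n)
     (\<lambda>X. exp (lam * (\<Sum>k<n. ind \<Lambda> (x + srw_pos X k))) * g (x + srw_pos X n))
   = (Top lam \<Lambda> ^^ n) g (x :: int ^ 'd::finite)"
proof (induction n arbitrary: g)
  case 0
  show ?case by (simp add: srw_increments_def srw_pos_def)
next
  case (Suc n)
  define E where "E = (\<lambda>f. exp (lam * (\<Sum>k<n. ind \<Lambda> (x + srw_pos f k))))"
  have "measure_pmf.expectation (srw_increments (Suc n))
     (\<lambda>X. exp (lam * (\<Sum>k<Suc n. ind \<Lambda> (x + srw_pos X k))) * g (x + srw_pos X (Suc n)))
   = measure_pmf.expectation (pair_pmf (pmf_of_set srw_steps) (srw_increments n))
     (\<lambda>p. exp (lam * (\<Sum>k<Suc n. ind \<Lambda> (x + srw_pos ((snd p)(n := fst p)) k))) * g (x + srw_pos ((snd p)(n := fst p)) (Suc n)))"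
    unfolding srw_incr_Suc integral_map_pmf by (simp only: case_prod_beta)
  also have "\<dots> = measure_pmf.expectation (srw_increments n)
     (\<lambda>f. measure_pmf.expectation (pmf_of_set srw_steps)
        (\<lambda>y. exp (lam * (\<Sum>k<Suc n. ind \<Lambda> (x + srw_pos (f(n := y)) k))) * g (x + srw_pos (f(n := y)) (Suc n))))"
    by (subst exp_pair) (simp_all add: srw_fin steps_finite steps_ne)
  also have "\<dots> = measure_pmf.expectation (srw_increments n)
     (\<lambda>f. E f * Top lam \<Lambda> g (x + srw_pos f n))"
  proof (rule Bochner_Integration.integral_cong[OF refl])
    fix f
    have s: "\<And>y. (\<Sum>k<Suc n. ind \<Lambda> (x + srw_pos (f(n := y)) k)) = (\<Sum>k<Suc n. ind \<Lambda> (x + srw_pos f k))"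
      by (rule sum.cong) (auto simp: srw_pos_upd)
    have "measure_pmf.expectation (pmf_of_set srw_steps)
        (\<lambda>y. exp (lam * (\<Sum>k<Suc n. ind \<Lambda> (x + srw_pos (f(n := y)) k))) * g (x + srw_pos (f(n := y)) (Suc n)))
      = measure_pmf.expectation (pmf_of_set srw_steps)
        (\<lambda>y. exp (lam * (\<Sum>k<Suc n. ind \<Lambda> (x + srw_pos f k))) * g ((x + srw_pos f n) + y))"
      by (simp only: s srw_pos_upd_Suc add.assoc)
    also have "\<dots> = exp (lam * (\<Sum>k<Suc n. ind \<Lambda> (x + srw_pos f k))) * Pop g (x + srw_pos f n)"
      using exp_step[of g "x + srw_pos f n"] by simp
    also have "\<dots> = E f * Top lam \<Lambda> g (x + srw_pos f n)"
      unfolding E_def Top_def by (simp add: distrib_left exp_add)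
    finally show "measure_pmf.expectation (pmf_of_set srw_steps)
        (\<lambda>y. exp (lam * (\<Sum>k<Suc n. ind \<Lambda> (x + srw_pos (f(n := y)) k))) * g (x + srw_pos (f(n := y)) (Suc n)))
      = E f * Top lam \<Lambda> g (x + srw_pos f n)" .
  qed
  also have "\<dots> = (Top lam \<Lambda> ^^ n) (Top lam \<Lambda> g) x" unfolding E_def by (rule Suc.IH)
  also have "\<dots> = (Top lam \<Lambda> ^^ Suc n) g x" by (simp only: funpow_Suc_right comp_def)
  finally show ?case .
qed

lemma mgf_eq:
  "measure_pmf.expectation (srw_increments n) (\<lambda>X. exp (lam * (\<Sum>k\<le>n. ind \<Lambda> (srw_pos X k))))
   = Fk lam \<Lambda> (Suc n) (0 :: int ^ 'd::finite)"
proof -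
  have "measure_pmf.expectation (srw_increments n) (\<lambda>X. exp (lam * (\<Sum>k\<le>n. ind \<Lambda> (srw_pos X k))))
      = measure_pmf.expectation (srw_increments n)
          (\<lambda>X. exp (lam * (\<Sum>k<n. ind \<Lambda> (0 + srw_pos X k))) * (\<lambda>y. exp (lam * ind \<Lambda> y)) (0 + srw_pos X n))"
    by (simp add: lessThan_Suc_atMost[symmetric] distrib_left exp_add)
  also have "\<dots> = (Top lam \<Lambda> ^^ n) (\<lambda>y. exp (lam * ind \<Lambda> y)) 0" by (rule H_lemma)
  also have "(\<lambda>y. exp (lam * ind \<Lambda> y)) = Top lam \<Lambda> (\<lambda>_. 1)"
    by (rule ext) (simp add: Top_def Pop_const)
  also have "(Top lam \<Lambda> ^^ n) (Top lam \<Lambda> (\<lambda>_. 1)) 0 = Fk lam \<Lambda> (Suc n) 0"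
    unfolding Fk_def by (simp only: funpow_Suc_right comp_def)
  finally show ?thesis .
qed

lemma card_range_le: "real (card (srw_range X n \<inter> \<Lambda>)) \<le> (\<Sum>k\<le>n. ind \<Lambda> (srw_pos X k))"
proof -
  have "srw_range X n \<inter> \<Lambda> = srw_pos X ` {k\<in>{..n}. srw_pos X k \<in> \<Lambda>}"
    unfolding srw_range_def by auto
  hence "card (srw_range X n \<inter> \<Lambda>) \<le> card {k\<in>{..n}. srw_pos X k \<in> \<Lambda>}"
    by (simp add: card_image_le)
  also have "real (card {k\<in>{..n}. srw_pos X k \<in> \<Lambda>}) = (\<Sum>k\<in>{k\<in>{..n}. srw_pos X k \<in> \<Lambda>}. (1::real))"
    by simp
  also have "\<dots> = (\<Sum>k\<le>n. ind \<Lambda> (srw_pos X k))"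
    unfolding ind_def by (rule sum.inter_filter) simp
  finally show ?thesis by simp
qed

lemma chernoff:
  assumes lam: "lam \<ge> 0"
  shows "measure_pmf.prob (srw_increments n) {X. real (card (srw_range X n \<inter> \<Lambda>)) \<ge> t}
     \<le> exp (- lam * t) * Fk lam \<Lambda> (Suc n) (0 :: int ^ 'd::finite)"
proof -
  define S where "S = {X. real (card (srw_range X n \<inter> \<Lambda>)) \<ge> t}"
  define L where "L = (\<lambda>X. (\<Sum>k\<le>n. ind \<Lambda> (srw_pos X k :: int ^ 'd)))"
  have "measure_pmf.prob (srw_increments n) S = measure_pmf.expectation (srw_increments n) (indicator S)"
    by simp
  also have "\<dots> \<le> measure_pmf.expectation (srw_increments n) (\<lambda>X. exp (- lam * t) * exp (lam * L X))"
  proof (rule integral_mono)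
    show "integrable (measure_pmf (srw_increments n)) (indicator S :: _ \<Rightarrow> real)"
      by (rule integrable_measure_pmf_finite[OF srw_fin])
    show "integrable (measure_pmf (srw_increments n)) (\<lambda>X. exp (- lam * t) * exp (lam * L X))"
      by (rule integrable_measure_pmf_finite[OF srw_fin])
    fix X
    show "indicator S X \<le> exp (- lam * t) * exp (lam * L X)"
    proof (cases "X \<in> S")
      case True
      hence "t \<le> L X" unfolding S_def L_def using card_range_le[of X n \<Lambda>] by simp
      hence "0 \<le> lam * L X - lam * t" using lam by (simp add: algebra_simps mult_left_mono)
      hence "1 \<le> exp (lam * L X - lam * t)" by simp
      moreover have "exp (- lam * t) * exp (lam * L X) = exp (lam * L X - lam * t)"
        unfolding mult_exp_exp by simp
      ultimately show ?thesis using True by simp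
    next
      case False then show ?thesis by simp
    qed
  qed
  also have "\<dots> = exp (- lam * t) * measure_pmf.expectation (srw_increments n) (\<lambda>X. exp (lam * L X))"
    by simp
  also have "measure_pmf.expectation (srw_increments n) (\<lambda>X. exp (lam * L X)) = Fk lam \<Lambda> (Suc n) 0"
    unfolding L_def by (rule mgf_eq)
  finally show ?thesis unfolding S_def .
qed

definition C0f :: "nat \<Rightarrow> real" where "C0f D = real D * 10 ^ D + 400 * real D ^ 2"
definition kapf :: "nat \<Rightarrow> real" where "kapf D = 24 * C0f D + 8 * C0f D * (3 + 32 * C0f D) + 2"

lemma C0f_ge: "D \<ge> 1 \<Longrightarrow> C0f D \<ge> 1"
proof -
  assume D: "D \<ge> 1"
  have "real D * 10 ^ D \<ge> 1 * 1" using D by (intro mult_mono) (auto simp: one_le_power)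
  moreover have "400 * real D ^ 2 \<ge> 0" by simp
  ultimately show ?thesis unfolding C0f_def by linarith
qed

lemma powr_eighth: "(1/8::real) powr (1/3) = 1/2"
proof -
  have a: "(1/2::real) ^ 3 = 1/8" by (simp add: power_divide)
  have b: "(1/2::real) powr real (3::nat) = (1/2) ^ 3" by (rule powr_realpow) simp
  have "(1/8::real) powr (1/3) = ((1/2) powr real (3::nat)) powr (1/3)" by (simp only: b a)
  also have "\<dots> = (1/2) powr (real (3::nat) * (1/3))" by (rule powr_powr)
  also have "\<dots> = 1/2" by simp
  finally show ?thesis .
qed

lemma floor_half: "(y::real) \<ge> 1 \<Longrightarrow> real (nat \<lfloor>y\<rfloor>) \<ge> y / 2 \<and> real (nat \<lfloor>y\<rfloor>) \<le> y \<and> nat \<lfloor>y\<rfloor> \<ge> 1"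
proof -
  assume y: "y \<ge> 1"
  have f1: "real_of_int \<lfloor>y\<rfloor> > y - 1" "real_of_int \<lfloor>y\<rfloor> \<le> y" by linarith+
  have f2: "\<lfloor>y\<rfloor> \<ge> 1" using y by linarith
  have e: "real (nat \<lfloor>y\<rfloor>) = real_of_int \<lfloor>y\<rfloor>" using f2 by simp
  have "real_of_int \<lfloor>y\<rfloor> \<ge> y / 2"
  proof (cases "y \<ge> 2")
    case True thus ?thesis using f1 by linarith
  next
    case False thus ?thesis using f2 by linarith
  qed
  moreover have "nat \<lfloor>y\<rfloor> \<ge> 1" using nat_mono[OF f2] by simp
  ultimately show ?thesis using e f1 by (intro conjI) linarith+
qed

lemma card_range_le_n: "card (srw_range X n \<inter> \<Lambda>) \<le> Suc n"
proof -
  have "card (srw_range X n \<inter> \<Lambda>) \<le> card (srw_range X n)"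
    by (rule card_mono) (simp_all add: srw_range_def)
  also have "\<dots> \<le> card {..n}" unfolding srw_range_def by (rule card_image_le) simp
  finally show ?thesis by simp
qed

lemma main_bound:
  fixes \<Lambda> :: "(int ^ 'd::finite) set"
  assumes D3: "CARD('d) \<ge> 3" and rho: "0 < \<rho>" "\<rho> < 1" and r: "r \<ge> 1"
    and dens: "\<forall>x::int ^ 'd. (\<forall>i. (2 * int r) dvd x $ i) \<longrightarrow>
          real (card (\<Lambda> \<inter> box_Q x (int r))) \<le> \<rho> * real (card (box_Q x (int r)))"
    and nbig: "real n \<ge> \<rho> powr (2 / real CARD('d) - 1) * real r ^ 2"
    and tbig: "t \<ge> kapf CARD('d) * \<rho> * real n"
  shows "measure_pmf.prob (srw_increments n) {X. real (card (srw_range X n \<inter> \<Lambda>)) \<ge> t}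
        \<le> exp (- (\<rho> powr (1 - 2 / real CARD('d)) * t / (2 * real r ^ 2)))"
proof -
  define D where "D = CARD('d)"
  define C0 where "C0 = C0f D"
  define K1 where "K1 = 4 * C0 * (3 + 32 * C0)"
  have D3': "D \<ge> 3" unfolding D_def by (rule D3)
  have C01: "C0 \<ge> 1" unfolding C0_def using D3' C0f_ge by simp
  have K1nn: "K1 \<ge> 0" unfolding K1_def using C01 by simp
  have kap: "kapf D = 24 * C0 + 2 * K1 + 2" unfolding kapf_def C0_def K1_def by simp
  define R2 where "R2 = real r ^ 2"
  have R21: "R2 \<ge> 1" unfolding R2_def using r by simp
  have pos2: "\<rho> powr (2 / real D - 1) * real r ^ 2 > 0" using rho r by simp
  have npos: "real n > 0" using nbig pos2 unfolding D_def by linarith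
  hence n1: "n \<ge> 1" by simp
  have tpos: "t \<ge> kapf D * \<rho> * real n" using tbig unfolding D_def .
  show ?thesis
  proof (cases "\<rho> > 1 / (8 * C0)")
    case True
    have "24 * C0 * \<rho> > 3"
    proof -
      have "8 * C0 * \<rho> > 1" using True C01 by (simp add: field_simps)
      thus ?thesis by linarith
    qed
    moreover have "kapf D * \<rho> = 24 * C0 * \<rho> + (2 * K1 * \<rho> + 2 * \<rho>)" unfolding kap by (simp add: algebra_simps)
    moreover have "2 * K1 * \<rho> + 2 * \<rho> \<ge> 0" using K1nn rho by simp
    ultimately have "kapf D * \<rho> > 3" by linarith
    hence "kapf D * \<rho> * real n > 3 * real n" using npos by simp
    moreover have "real n \<ge> 1" using n1 by simp
    ultimately have "t > real n + 1" using tpos by linarith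
    hence tn: "t > real (Suc n)" by simp
    have "{X. real (card (srw_range X n \<inter> \<Lambda>)) \<ge> t} = {}"
    proof -
      { fix X
        have "real (card (srw_range X n \<inter> \<Lambda>)) \<le> real (Suc n)" using card_range_le_n[of X n \<Lambda>] by linarith
        hence "\<not> real (card (srw_range X n \<inter> \<Lambda>)) \<ge> t" using tn by simp }
      thus ?thesis by auto
    qed
    thus ?thesis by simp
  next
    case False
    hence rsmall: "8 * C0 * \<rho> \<le> 1" using C01 rho by (simp add: field_simps)
    have "1 * (8 * \<rho>) \<le> C0 * (8 * \<rho>)" by (rule mult_right_mono) (use C01 rho in auto)
    hence r8: "\<rho> \<le> 1/8" using rsmall by (simp add: algebra_simps)
    define P1 where "P1 = \<rho> powr (1 - 2 / real D)"
    define P2 where "P2 = \<rho> powr (2 / real D)"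
    have P1pos: "P1 > 0" and P2pos: "P2 > 0" unfolding P1_def P2_def using rho by simp_all
    have P12: "P1 * P2 = \<rho>"
    proof -
      have "P1 * P2 = \<rho> powr ((1 - 2 / real D) + 2 / real D)" unfolding P1_def P2_def by (rule powr_add[symmetric])
      also have "(1 - 2 / real D) + 2 / real D = 1" by simp
      finally show ?thesis using rho by simp
    qed
    have P1le: "P1 \<le> 1/2"
    proof -
      have "1/3 \<le> 1 - 2 / real D" using D3' by (simp add: field_simps)
      hence "P1 \<le> \<rho> powr (1/3)" unfolding P1_def using rho by (intro powr_mono') auto
      also have "\<dots> \<le> (1/8) powr (1/3)" using rho r8 by (intro powr_mono2) auto
      finally show ?thesis using powr_eighth by simp
    qed
    have nbig': "\<rho> * real n \<ge> P2 * R2"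
    proof -
      have "\<rho> * (\<rho> powr (2 / real D - 1) * real r ^ 2) \<le> \<rho> * real n"
        using nbig rho unfolding D_def by (intro mult_left_mono) auto
      moreover have "\<rho> * \<rho> powr (2 / real D - 1) = P2"
      proof -
        have "\<rho> powr (1 + (2 / real D - 1)) = \<rho> powr 1 * \<rho> powr (2 / real D - 1)" by (rule powr_add)
        also have "\<rho> powr 1 = \<rho>" using rho by simp
        also have "1 + (2 / real D - 1) = 2 / real D" by simp
        finally show ?thesis unfolding P2_def by simp
      qed
      ultimately show ?thesis unfolding R2_def by (metis mult.assoc)
    qed
    define lam where "lam = P1 / R2"
    have lampos: "lam > 0" unfolding lam_def using P1pos R21 by simp
    have lamle: "lam \<le> 1/2"
    proof -
      have "lam \<le> P1" unfolding lam_def using P1pos R21 by (simp add: divide_le_eq)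
      thus ?thesis using P1le by simp
    qed
    define c where "c = exp lam - 1"
    have c0: "c \<ge> 0" unfolding c_def using lampos by simp
    have c2: "c \<le> 2 * lam"
    proof -
      have "norm (exp lam) \<le> 1 + 2 * norm lam" by (rule exp_bound_lemma) (use lampos lamle in simp)
      thus ?thesis unfolding c_def using lampos by simp
    qed
    define a where "a = C0 * \<rho>"
    define b where "b = C0 * P2 * R2"
    have a0: "a \<ge> 0" and b0: "b \<ge> 0" unfolding a_def b_def using C01 rho P2pos R21 by simp_all
    have Lb: "\<And>m x. Loc \<Lambda> m x \<le> a * real m + b"
    proof -
      fix m x
      have "Loc \<Lambda> m x \<le> C0 * (\<rho> * real m + \<rho> powr (2 / real D) * real r ^ 2)"
        unfolding Loc_def C0_def C0f_def D_def
        by (rule Loc_bound[OF r rho(1) D3]) (use dens in blast)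
      thus "Loc \<Lambda> m x \<le> a * real m + b" unfolding a_def b_def P2_def R2_def by (simp add: algebra_simps)
    qed
    define Y where "Y = R2 / (8 * C0 * P1 * \<rho>)"
    have den_pos: "8 * C0 * P1 * \<rho> > 0" using C01 P1pos rho by simp
    have Y1: "Y \<ge> 1"
    proof -
      have "8 * C0 * P1 * \<rho> \<le> 8 * C0 * 1 * \<rho>"
        using P1le C01 rho by (intro mult_right_mono mult_left_mono) auto
      hence "8 * C0 * P1 * \<rho> \<le> R2" using rsmall R21 by simp
      thus ?thesis unfolding Y_def using den_pos by (simp add: le_divide_eq)
    qed
    define m0 where "m0 = nat \<lfloor>Y\<rfloor>"
    have m0: "real m0 \<ge> Y / 2" "real m0 \<le> Y" "m0 \<ge> 1" using floor_half[OF Y1] unfolding m0_def by auto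
    have small: "(exp lam - 1) * (a * real m0 + b) \<le> 1/2"
    proof -
      have "c * (a * real m0 + b) \<le> 2 * lam * (a * real m0 + b)"
        using c2 a0 b0 by (intro mult_right_mono) auto
      also have "\<dots> = 2 * lam * a * real m0 + 2 * lam * b" by (simp add: algebra_simps)
      also have "2 * lam * a * real m0 \<le> 2 * lam * a * Y"
        using m0 lampos a0 by (intro mult_left_mono) auto
      also have "2 * lam * a * Y = 1/4"
        unfolding lam_def a_def Y_def using P1pos R21 C01 rho by (simp add: field_simps)
      also have "2 * lam * b = 2 * C0 * \<rho>"
        unfolding lam_def b_def using R21 P12 by (simp add: field_simps)
      finally show ?thesis unfolding c_def using rsmall by simp
    qed
    have FK: "Fk lam \<Lambda> (Suc n) 0 \<le> exp (2 * c * (a * real (Suc n) + (real (Suc n div m0) + 1) * b))"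
      unfolding c_def by (rule FK_general[OF less_imp_le[OF lampos] a0 b0 m0(3) Lb small])
    define q where "q = Suc n div m0"
    have qb: "real q * b \<le> 32 * C0 * C0 * \<rho> * real n"
    proof -
      have "q * m0 \<le> Suc n" unfolding q_def by simp
      hence "real q * real m0 \<le> real (Suc n)" by (metis of_nat_le_iff of_nat_mult)
      moreover have "real q * (Y / 2) \<le> real q * real m0" by (rule mult_left_mono) (use m0 in auto)
      ultimately have "real q * (Y / 2) \<le> real (Suc n)" by linarith
      hence qY: "real q \<le> 2 * real (Suc n) / Y" using Y1 by (simp add: field_simps)
      have "real q * b \<le> 2 * real (Suc n) / Y * b" using qY b0 by (rule mult_right_mono)
      also have "2 * real (Suc n) / Y * b = 16 * C0 * C0 * (P1 * P2) * \<rho> * real (Suc n)"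
        unfolding Y_def b_def using P1pos R21 C01 rho by (simp add: field_simps)
      also have "\<dots> = 16 * C0 * C0 * \<rho> * \<rho> * real (Suc n)" using P12 by simp
      also have "\<dots> \<le> 16 * C0 * C0 * \<rho> * 1 * (2 * real n)"
        using rho C01 n1 by (intro mult_mono mult_left_mono) auto
      finally show ?thesis by simp
    qed
    have bb: "b \<le> C0 * \<rho> * real n" unfolding b_def using nbig' C01 by (simp add: mult.assoc mult_left_mono)
    have aa: "a * real (Suc n) \<le> 2 * C0 * \<rho> * real n"
    proof -
      have "real (Suc n) \<le> 2 * real n" using n1 by simp
      hence "a * real (Suc n) \<le> a * (2 * real n)" using a0 by (rule mult_left_mono)
      thus ?thesis unfolding a_def by (simp add: algebra_simps)
    qed
    have Ebound: "2 * c * (a * real (Suc n) + (real q + 1) * b) \<le> lam * K1 * \<rho> * real n"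
    proof -
      have "a * real (Suc n) + (real q + 1) * b \<le> C0 * (3 + 32 * C0) * \<rho> * real n"
        using qb bb aa by (simp add: algebra_simps)
      hence "2 * c * (a * real (Suc n) + (real q + 1) * b) \<le> 2 * c * (C0 * (3 + 32 * C0) * \<rho> * real n)"
        using c0 by (intro mult_left_mono) auto
      also have "\<dots> \<le> 2 * (2 * lam) * (C0 * (3 + 32 * C0) * \<rho> * real n)"
        using c2 C01 rho npos by (intro mult_right_mono mult_left_mono) auto
      also have "\<dots> = lam * K1 * \<rho> * real n" unfolding K1_def by (simp add: algebra_simps)
      finally show ?thesis .
    qed
    have Kt: "K1 * \<rho> * real n \<le> t / 2"
    proof -
      have "kapf D * \<rho> * real n \<ge> 2 * K1 * \<rho> * real n"
        unfolding kap using C01 rho npos K1nn by (intro mult_right_mono) auto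
      thus ?thesis using tpos by simp
    qed
    have "measure_pmf.prob (srw_increments n) {X. real (card (srw_range X n \<inter> \<Lambda>)) \<ge> t}
        \<le> exp (- lam * t) * Fk lam \<Lambda> (Suc n) 0"
      by (rule chernoff) (use lampos in simp)
    also have "\<dots> \<le> exp (- lam * t) * exp (lam * K1 * \<rho> * real n)"
      using FK Ebound unfolding q_def by (intro mult_left_mono) (auto intro: order_trans)
    also have "\<dots> = exp (- lam * t + lam * (K1 * \<rho> * real n))" by (simp add: mult_exp_exp algebra_simps)
    also have "\<dots> \<le> exp (- lam * t + lam * (t / 2))"
      using Kt lampos by (intro exp_mono add_left_mono mult_left_mono) auto
    also have "- lam * t + lam * (t / 2) = - (P1 * t / (2 * R2))" unfolding lam_def by (simp add: field_simps)
    finally show ?thesis unfolding P1_def R2_def D_def .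
  qed
qed

theorem proposition1p3:
  assumes "CARD('d::finite) \<ge> 3"
  shows "\<exists>\<kappa>::real. \<kappa> > 1 \<and>
    (\<forall>(\<rho>::real) (r::nat) (\<Lambda>::(int ^ 'd) set) (n::nat) (t::real).
      0 < \<rho> \<and> \<rho> < 1 \<and> r \<ge> 1 \<and>
      (\<forall>x::int ^ 'd. (\<forall>i. (2 * int r) dvd x $ i) \<longrightarrow>
          real (card (\<Lambda> \<inter> box_Q x (int r))) \<le> \<rho> * real (card (box_Q x (int r)))) \<and>
      real n \<ge> \<rho> powr (2 / real CARD('d) - 1) * real r ^ 2 \<and>
      t \<ge> \<kappa> * \<rho> * real n \<longrightarrow>
      measure_pmf.prob (srw_increments n) {X. real (card (srw_range X n \<inter> \<Lambda>)) \<ge> t}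
        \<le> exp (- (\<rho> powr (1 - 2 / real CARD('d)) * t / (2 * real r ^ 2))))"
proof (intro exI[of _ "kapf CARD('d)"] conjI allI impI)
  have "C0f CARD('d) \<ge> 1" using assms by (intro C0f_ge) simp
  moreover have "8 * C0f CARD('d) * (3 + 32 * C0f CARD('d)) \<ge> 0" using calculation by simp
  ultimately show "kapf CARD('d) > 1" unfolding kapf_def by linarith
next
  fix \<rho> :: real and r :: nat and \<Lambda> :: "(int ^ 'd) set" and n :: nat and t :: real
  assume h: "0 < \<rho> \<and> \<rho> < 1 \<and> r \<ge> 1 \<and>
      (\<forall>x::int ^ 'd. (\<forall>i. (2 * int r) dvd x $ i) \<longrightarrow>
          real (card (\<Lambda> \<inter> box_Q x (int r))) \<le> \<rho> * real (card (box_Q x (int r)))) \<and>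
      real n \<ge> \<rho> powr (2 / real CARD('d) - 1) * real r ^ 2 \<and>
      t \<ge> kapf CARD('d) * \<rho> * real n"
  show "measure_pmf.prob (srw_increments n) {X. real (card (srw_range X n \<inter> \<Lambda>)) \<ge> t}
        \<le> exp (- (\<rho> powr (1 - 2 / real CARD('d)) * t / (2 * real r ^ 2)))"
    using main_bound[OF assms] h by blast
qed


end
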